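(* Assume (A1), (A3), (A4), that the propensity models are correctly specified with true parameter $\alpha_0$, and that the working confounding functions are correct ($c_k(y,\bar a_K,\bar l_k;\gamma_k)=c_k(y,\bar a_K,\bar l_k)$ for all $k$). Then $E[U^{\mathrm{BC\text{-}IPW}}(O;\theta_{q0},\alpha_0)]=0$.
   Context: Setting (sequential ignorability is not assumed): $O=(L_1,A_1,\dots,L_K,A_K,Y)$, $A_k\in\{0,1\}$, $\bar A_k,\bar L_k$ histories, $\bar{\mathbb A}_K=\{0,1\}^K$; $Y_{\bar a_K}$ potential outcome, continuous on $[y_{\min},y_{\max}]$. $Z\subset L_1$; $h(\bar a_K,Z;\theta_q)$ smooth; $d=\rho(\bar a_K,Z)\partial h/\partial\theta_q$; $\theta_{q0}$ solves $E[\sum_{\bar a_K}d(\bar a_K,Z;\theta_q)\{F_{Y_{\bar a_K}|Z}(h(\bar a_K,Z;\theta_q)|Z)-q\}]=0$. (A1) $Y_{\bar a_K}=Y$ if $\bar A_K=\bar a_K$; (A3) positivity of $f_{A_k|\bar A_{k-1},\bar L_k}$; (A4) unique $q$-th quantile of $F_{Y_{\bar a_K}|Z}$. Propensity models $\pi_k(\bar a_k,\bar l_k;\alpha_k)$ (correct: equal $f_{A_k|\bar A_{k-1},\bar L_k}$ at $\alpha_{k,0}$), $\bar\pi_K=\prod_k\pi_k$. Confounding function $c_k(y,\bar a_K,\bar l_k)=F_{Y_{\bar a_K}|\bar A_k,\bar L_k}(y|(a_k,\bar a_{k-1}),\bar l_k)-F_{Y_{\bar a_K}|\bar A_k,\bar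 L_k}(y|(1-a_k,\bar a_{k-1}),\bar l_k)$, working version $c_k(\cdot;\gamma_k)$ with known $\gamma_k$, $c^*_k(y,\bar a_K,\bar l_k;\gamma_k,\alpha_k)=c_k(y,\bar a_K,\bar l_k;\gamma_k)\pi_k((1-a_k,\bar a_{k-1}),\bar l_k;\alpha_k)$. $U^{\mathrm{BC\text{-}IPW}}(O;\theta_q,\alpha)=\frac{d(\bar A_K,Z;\theta_q)}{\bar\pi_K(\bar A_K,\bar L_K;\alpha)}\{\mathbb I(Y\le h(\bar A_K,Z;\theta_q))-\sum_{k=1}^Kc^*_k(h(\bar A_K,Z;\theta_q),\bar A_K,\bar L_k;\gamma_k,\alpha_k)-q\}$. *)

theory Defs
  imports "HOL-Probability.Probability"
begin

text \<open>Treatment histories are encoded as functions nat => bool that are False outside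
  the index range; the K-fold treatment regimes {0,1}^K are exactly those a with a i = False
  for i outside {1..K}.\<close>

definition regimes :: "nat \<Rightarrow> (nat \<Rightarrow> bool) set" where
  "regimes K = {a. \<forall>i. a i \<longrightarrow> i \<in> {1..K}}"

definition trunc :: "nat \<Rightarrow> (nat \<Rightarrow> bool) \<Rightarrow> (nat \<Rightarrow> bool)" where
  "trunc k a = (\<lambda>i. i \<in> {1..k} \<and> a i)"

definition abar :: "(nat \<Rightarrow> 'w \<Rightarrow> bool) \<Rightarrow> nat \<Rightarrow> 'w \<Rightarrow> (nat \<Rightarrow> bool)" where
  "abar A k \<omega> = (\<lambda>i. i \<in> {1..k} \<and> A i \<omega>)"

definition lbar :: "(nat \<Rightarrow> 'w \<Rightarrow> 'l) \<Rightarrow> nat \<Rightarrow> 'w \<Rightarrow> (nat \<Rightarrow> 'l)" where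
  "lbar L k \<omega> = restrict (\<lambda>i. L i \<omega>) {1..k}"

definition hist_space :: "'l measure \<Rightarrow> nat \<Rightarrow> ((nat \<Rightarrow> bool) \<times> (nat \<Rightarrow> 'l)) measure" where
  "hist_space N k = count_space UNIV \<Otimes>\<^sub>M (\<Pi>\<^sub>M i\<in>{1..k}. N)"

text \<open>f(X) is a version of the conditional probability P(P | X), i.e. f is a function of
  the conditioning value with E[1_P 1_{X in B}] = E[f(X) 1_{X in B}] for all measurable B.\<close>
definition cond_version ::
  "'w measure \<Rightarrow> 'x measure \<Rightarrow> ('w \<Rightarrow> 'x) \<Rightarrow> ('w \<Rightarrow> bool) \<Rightarrow> ('x \<Rightarrow> real) \<Rightarrow> bool" where
  "cond_version M S X P f \<longleftrightarrow>
     X \<in> measurable M S \<and> {\<omega>\<in>space M. P \<omega>} \<in> sets M \<and> f \<in> borel_measurable S \<and>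
     integrable M (\<lambda>\<omega>. f (X \<omega>)) \<and>
     (\<forall>B\<in>sets S. measure M ({\<omega>\<in>space M. P \<omega>} \<inter> (X -` B \<inter> space M))
                 = (\<integral>\<omega>. f (X \<omega>) * indicator (X -` B \<inter> space M) \<omega> \<partial>M))"

text \<open>G is a (regular) conditional CDF of V given X: G y x = F_{V|X}(y|x).\<close>
definition cond_cdf ::
  "'w measure \<Rightarrow> 'x measure \<Rightarrow> ('w \<Rightarrow> 'x) \<Rightarrow> ('w \<Rightarrow> real) \<Rightarrow> (real \<Rightarrow> 'x \<Rightarrow> real) \<Rightarrow> bool" where
  "cond_cdf M S X V G \<longleftrightarrow>
     (\<forall>y. cond_version M S X (\<lambda>\<omega>. V \<omega> \<le> y) (G y)) \<and>
     (\<forall>x\<in>space S. mono (\<lambda>y. G y x) \<and> (\<forall>y. 0 \<le> G y x \<and> G y x \<le> 1) \<and>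
        (\<forall>y. continuous (at_right y) (\<lambda>t. G t x)) \<and>
        ((\<lambda>t. G t x) \<longlongrightarrow> 0) at_bot \<and> ((\<lambda>t. G t x) \<longlongrightarrow> 1) at_top)"

text \<open>True confounding function c_k(y, a_K, l_k) built from the conditional CDFs
  Fk a k y (a_k, l_k) = F_{Y_a | A_k, L_k}(y | a_k, l_k).\<close>
definition conf_true ::
  "((nat \<Rightarrow> bool) \<Rightarrow> nat \<Rightarrow> real \<Rightarrow> ((nat \<Rightarrow> bool) \<times> (nat \<Rightarrow> 'l)) \<Rightarrow> real)
   \<Rightarrow> nat \<Rightarrow> real \<Rightarrow> (nat \<Rightarrow> bool) \<Rightarrow> (nat \<Rightarrow> 'l) \<Rightarrow> real" where
  "conf_true Fk k y a l =
     Fk a k y (trunc k a, l) - Fk a k y ((trunc k a)(k := \<not> a k), l)"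

definition U_BCIPW ::
  "nat \<Rightarrow> (nat \<Rightarrow> 'w \<Rightarrow> bool) \<Rightarrow> (nat \<Rightarrow> 'w \<Rightarrow> 'l) \<Rightarrow> ('w \<Rightarrow> real) \<Rightarrow> ('l \<Rightarrow> 'z)
   \<Rightarrow> ((nat \<Rightarrow> bool) \<Rightarrow> 'z \<Rightarrow> 'th \<Rightarrow> real)
   \<Rightarrow> ((nat \<Rightarrow> bool) \<Rightarrow> 'z \<Rightarrow> 'th \<Rightarrow> 'v::real_vector)
   \<Rightarrow> (nat \<Rightarrow> (nat \<Rightarrow> bool) \<Rightarrow> (nat \<Rightarrow> 'l) \<Rightarrow> 'p \<Rightarrow> real)
   \<Rightarrow> (nat \<Rightarrow> real \<Rightarrow> (nat \<Rightarrow> bool) \<Rightarrow> (nat \<Rightarrow> 'l) \<Rightarrow> 'g \<Rightarrow> real)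
   \<Rightarrow> (nat \<Rightarrow> 'g) \<Rightarrow> real \<Rightarrow> 'th \<Rightarrow> (nat \<Rightarrow> 'p) \<Rightarrow> 'w \<Rightarrow> 'v" where
  "U_BCIPW K A L Y zf h d \<pi> c \<gamma> q \<theta> \<alpha> \<omega> =
    (let aK = abar A K \<omega>; z = zf (L 1 \<omega>); y = h aK z \<theta>;
         pibar = (\<Prod>k\<in>{1..K}. \<pi> k (abar A k \<omega>) (lbar L k \<omega>) (\<alpha> k));
         cstar = (\<Sum>k\<in>{1..K}. c k y aK (lbar L k \<omega>) (\<gamma> k)
                      * \<pi> k ((abar A k \<omega>)(k := \<not> A k \<omega>)) (lbar L k \<omega>) (\<alpha> k))
     in (((if Y \<omega> \<le> y then 1 else 0) - cstar - q) / pibar) *\<^sub>R d aK z \<theta>)"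

end

theory Submission
  imports Defs
begin


lemma cv_basic:
  assumes "cond_version M S X P p"
  shows "X \<in> measurable M S" "{\<omega>\<in>space M. P \<omega>} \<in> sets M" "p \<in> borel_measurable S"
    "integrable M (\<lambda>\<omega>. p (X \<omega>))"
    "\<And>B. B \<in> sets S \<Longrightarrow> measure M ({\<omega>\<in>space M. P \<omega>} \<inter> (X -` B \<inter> space M))
                 = (\<integral>\<omega>. p (X \<omega>) * indicator (X -` B \<inter> space M) \<omega> \<partial>M)"
  using assms unfolding cond_version_def by auto

lemma cv_AE_bounds:
  assumes PS: "prob_space M" and cv: "cond_version M S X P p"
  shows "AE \<omega> in M. 0 \<le> p (X \<omega>) \<and> p (X \<omega>) \<le> 1"
proof -
  interpret prob_space M by fact
  note b = cv_basic[OF cv]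
  have pX: "(\<lambda>\<omega>. p (X \<omega>)) \<in> borel_measurable M" using b(1,3) by measurable
  define B0 where "B0 = {x\<in>space S. p x < 0}"
  have B0: "B0 \<in> sets S" unfolding B0_def using b(3) by measurable
  have i0: "integrable M (\<lambda>\<omega>. - (p (X \<omega>) * indicator (X -` B0 \<inter> space M) \<omega>))"
    using b(4) B0 b(1) by (intro integrable_minus integrable_real_mult_indicator) auto
  have "(\<integral>\<omega>. - (p (X \<omega>) * indicator (X -` B0 \<inter> space M) \<omega>) \<partial>M) \<le> 0"
    using b(5)[OF B0] measure_nonneg[of M "{\<omega>\<in>space M. P \<omega>} \<inter> (X -` B0 \<inter> space M)"] by simp
  moreover have nn: "AE \<omega> in M. 0 \<le> - (p (X \<omega>) * indicator (X -` B0 \<inter> space M) \<omega>)"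
    by (intro AE_I2) (auto simp: indicator_def B0_def)
  moreover have "0 \<le> (\<integral>\<omega>. - (p (X \<omega>) * indicator (X -` B0 \<inter> space M) \<omega>) \<partial>M)"
    using nn by (intro integral_nonneg_AE) 
  ultimately have "(\<integral>\<omega>. - (p (X \<omega>) * indicator (X -` B0 \<inter> space M) \<omega>) \<partial>M) = 0" by linarith
  then have ae0: "AE \<omega> in M. - (p (X \<omega>) * indicator (X -` B0 \<inter> space M) \<omega>) = 0"
    using integral_nonneg_eq_0_iff_AE[OF i0 nn] by simp
  define B1 where "B1 = {x\<in>space S. p x > 1}"
  have B1: "B1 \<in> sets S" unfolding B1_def using b(3) by measurable
  have XB1: "X -` B1 \<inter> space M \<in> sets M" using B1 b(1) by measurable
  have i1: "integrable M (\<lambda>\<omega>. (p (X \<omega>) - 1) * indicator (X -` B1 \<inter> space M) \<omega>)"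
    using b(4) XB1 by (intro integrable_real_mult_indicator) auto
  have "measure M ({\<omega>\<in>space M. P \<omega>} \<inter> (X -` B1 \<inter> space M)) \<le> measure M (X -` B1 \<inter> space M)"
    using XB1 by (intro finite_measure_mono) auto
  also have "\<dots> = (\<integral>\<omega>. indicator (X -` B1 \<inter> space M) \<omega> \<partial>M)"
    using XB1 by (simp add: integral_indicator Int_absorb2 sets.sets_into_space)
  finally have "(\<integral>\<omega>. p (X \<omega>) * indicator (X -` B1 \<inter> space M) \<omega> \<partial>M)
      \<le> (\<integral>\<omega>. indicator (X -` B1 \<inter> space M) \<omega> \<partial>M)" using b(5)[OF B1] by simp
  moreover have "(\<integral>\<omega>. (p (X \<omega>) - 1) * indicator (X -` B1 \<inter> space M) \<omega> \<partial>M)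
     = (\<integral>\<omega>. p (X \<omega>) * indicator (X -` B1 \<inter> space M) \<omega> \<partial>M) - (\<integral>\<omega>. indicator (X -` B1 \<inter> space M) \<omega> \<partial>M)"
  proof -
    have ia: "integrable M (\<lambda>\<omega>. p (X \<omega>) * indicator (X -` B1 \<inter> space M) \<omega>)"
      using b(4) XB1 by (intro integrable_real_mult_indicator) auto
    have ib: "integrable M (\<lambda>\<omega>. indicator (X -` B1 \<inter> space M) \<omega> :: real)"
      using XB1 by (intro integrable_real_indicator) (auto simp: emeasure_eq_measure)
    show ?thesis unfolding left_diff_distrib mult_1 by (rule Bochner_Integration.integral_diff[OF ia ib])
  qed
  moreover have nn1: "AE \<omega> in M. 0 \<le> (p (X \<omega>) - 1) * indicator (X -` B1 \<inter> space M) \<omega>"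
    by (intro AE_I2) (auto simp: indicator_def B1_def)
  moreover have "0 \<le> (\<integral>\<omega>. (p (X \<omega>) - 1) * indicator (X -` B1 \<inter> space M) \<omega> \<partial>M)"
    using nn1 by (intro integral_nonneg_AE)
  ultimately have "(\<integral>\<omega>. (p (X \<omega>) - 1) * indicator (X -` B1 \<inter> space M) \<omega> \<partial>M) = 0" by linarith
  then have ae1: "AE \<omega> in M. (p (X \<omega>) - 1) * indicator (X -` B1 \<inter> space M) \<omega> = 0"
    using integral_nonneg_eq_0_iff_AE[OF i1 nn1] by simp
  show ?thesis using ae0 ae1 AE_space
  proof (eventually_elim)
    case (elim \<omega>)
    then have "X \<omega> \<in> space S" using b(1) by (meson measurable_space)
    then show ?case using elim by (auto simp: B0_def B1_def indicator_def split: if_splits)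
  qed
qed

lemma cv_measure_eq:
  assumes PS: "prob_space M" and cv: "cond_version M S X P p"
  shows "distr (density M (\<lambda>\<omega>. ennreal (indicator {\<omega>\<in>space M. P \<omega>} \<omega>))) S X
       = distr (density M (\<lambda>\<omega>. ennreal (p (X \<omega>)))) S X"
proof (rule measure_eqI)
  interpret prob_space M by fact
  note b = cv_basic[OF cv]
  have pX: "(\<lambda>\<omega>. p (X \<omega>)) \<in> borel_measurable M" using b(1,3) by measurable
  have ae: "AE \<omega> in M. 0 \<le> p (X \<omega>) \<and> p (X \<omega>) \<le> 1" by (rule cv_AE_bounds[OF PS cv])
  show "sets (distr (density M (\<lambda>\<omega>. ennreal (indicator {\<omega>\<in>space M. P \<omega>} \<omega>))) S X)
       = sets (distr (density M (\<lambda>\<omega>. ennreal (p (X \<omega>)))) S X)" by simp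
  fix B assume "B \<in> sets (distr (density M (\<lambda>\<omega>. ennreal (indicator {\<omega>\<in>space M. P \<omega>} \<omega>))) S X)"
  then have B: "B \<in> sets S" by simp
  have XB: "X -` B \<inter> space M \<in> sets M" using B b(1) by measurable
  have Xd1: "X \<in> measurable (density M (\<lambda>\<omega>. ennreal (indicator {\<omega>\<in>space M. P \<omega>} \<omega>))) S"
    using b(1) by simp
  have Xd2: "X \<in> measurable (density M (\<lambda>\<omega>. ennreal (p (X \<omega>)))) S"
    using b(1) by simp
  have "emeasure (distr (density M (\<lambda>\<omega>. ennreal (indicator {\<omega>\<in>space M. P \<omega>} \<omega>))) S X) B
      = emeasure (density M (\<lambda>\<omega>. ennreal (indicator {\<omega>\<in>space M. P \<omega>} \<omega>))) (X -` B \<inter> space M)"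
    using Xd1 B by (simp add: emeasure_distr)
  also have "\<dots> = (\<integral>\<^sup>+\<omega>. ennreal (indicator {\<omega>\<in>space M. P \<omega>} \<omega>) * indicator (X -` B \<inter> space M) \<omega> \<partial>M)"
    using XB b(2) by (intro emeasure_density) auto
  also have "\<dots> = (\<integral>\<^sup>+\<omega>. indicator ({\<omega>\<in>space M. P \<omega>} \<inter> (X -` B \<inter> space M)) \<omega> \<partial>M)"
    by (intro nn_integral_cong) (auto simp: indicator_def)
  also have "\<dots> = emeasure M ({\<omega>\<in>space M. P \<omega>} \<inter> (X -` B \<inter> space M))"
    using XB b(2) by (intro nn_integral_indicator) auto
  also have "\<dots> = ennreal (measure M ({\<omega>\<in>space M. P \<omega>} \<inter> (X -` B \<inter> space M)))"
    by (simp add: emeasure_eq_measure)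
  also have "\<dots> = ennreal (\<integral>\<omega>. p (X \<omega>) * indicator (X -` B \<inter> space M) \<omega> \<partial>M)"
    using b(5)[OF B] by simp
  also have "\<dots> = (\<integral>\<^sup>+\<omega>. ennreal (p (X \<omega>) * indicator (X -` B \<inter> space M) \<omega>) \<partial>M)"
    using XB b(4) ae
    by (intro nn_integral_eq_integral[symmetric] integrable_real_mult_indicator)
       (auto elim!: eventually_mono simp: indicator_def)
  also have "\<dots> = (\<integral>\<^sup>+\<omega>. ennreal (p (X \<omega>)) * indicator (X -` B \<inter> space M) \<omega> \<partial>M)"
    by (intro nn_integral_cong) (auto simp: indicator_def)
  also have "\<dots> = emeasure (density M (\<lambda>\<omega>. ennreal (p (X \<omega>)))) (X -` B \<inter> space M)"
    using XB pX by (intro emeasure_density[symmetric]) auto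
  also have "\<dots> = emeasure (distr (density M (\<lambda>\<omega>. ennreal (p (X \<omega>)))) S X) B"
    using Xd2 B by (simp add: emeasure_distr)
  finally show "emeasure (distr (density M (\<lambda>\<omega>. ennreal (indicator {\<omega>\<in>space M. P \<omega>} \<omega>))) S X) B
      = emeasure (distr (density M (\<lambda>\<omega>. ennreal (p (X \<omega>)))) S X) B" .
qed

lemma cv_integral:
  fixes f :: "'x \<Rightarrow> 'b::{banach, second_countable_topology}"
  assumes PS: "prob_space M" and cv: "cond_version M S X P p" and f: "f \<in> borel_measurable S"
  shows "integrable M (\<lambda>\<omega>. indicator {\<omega>\<in>space M. P \<omega>} \<omega> *\<^sub>R f (X \<omega>))
           = integrable M (\<lambda>\<omega>. p (X \<omega>) *\<^sub>R f (X \<omega>))"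
    and "(\<integral>\<omega>. indicator {\<omega>\<in>space M. P \<omega>} \<omega> *\<^sub>R f (X \<omega>) \<partial>M)
           = (\<integral>\<omega>. p (X \<omega>) *\<^sub>R f (X \<omega>) \<partial>M)"
proof -
  interpret prob_space M by fact
  note b = cv_basic[OF cv]
  have pX: "(\<lambda>\<omega>. p (X \<omega>)) \<in> borel_measurable M" using b(1,3) by measurable
  have fX: "(\<lambda>\<omega>. f (X \<omega>)) \<in> borel_measurable M" using b(1) f by measurable
  have iP: "(\<lambda>\<omega>. indicator {\<omega>\<in>space M. P \<omega>} \<omega> :: real) \<in> borel_measurable M"
    using b(2) by (intro borel_measurable_indicator)
  have ae: "AE \<omega> in M. 0 \<le> p (X \<omega>)" using cv_AE_bounds[OF PS cv] by (auto elim: eventually_mono)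
  have Xd1: "X \<in> measurable (density M (\<lambda>\<omega>. ennreal (indicator {\<omega>\<in>space M. P \<omega>} \<omega>))) S"
    using b(1) by simp
  have Xd2: "X \<in> measurable (density M (\<lambda>\<omega>. ennreal (p (X \<omega>)))) S"
    using b(1) by simp
  note eq = cv_measure_eq[OF PS cv]
  have "integrable M (\<lambda>\<omega>. indicator {\<omega>\<in>space M. P \<omega>} \<omega> *\<^sub>R f (X \<omega>))
      = integrable (density M (\<lambda>\<omega>. ennreal (indicator {\<omega>\<in>space M. P \<omega>} \<omega>))) (\<lambda>\<omega>. f (X \<omega>))"
    using fX iP by (subst integrable_density) auto
  also have "\<dots> = integrable (distr (density M (\<lambda>\<omega>. ennreal (indicator {\<omega>\<in>space M. P \<omega>} \<omega>))) S X) f"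
    using Xd1 f by (simp add: integrable_distr_eq)
  also have "\<dots> = integrable (distr (density M (\<lambda>\<omega>. ennreal (p (X \<omega>)))) S X) f"
    using eq by simp
  also have "\<dots> = integrable (density M (\<lambda>\<omega>. ennreal (p (X \<omega>)))) (\<lambda>\<omega>. f (X \<omega>))"
    using Xd2 f by (simp add: integrable_distr_eq)
  also have "\<dots> = integrable M (\<lambda>\<omega>. p (X \<omega>) *\<^sub>R f (X \<omega>))"
    using fX pX ae by (subst integrable_density) auto
  finally show "integrable M (\<lambda>\<omega>. indicator {\<omega>\<in>space M. P \<omega>} \<omega> *\<^sub>R f (X \<omega>))
           = integrable M (\<lambda>\<omega>. p (X \<omega>) *\<^sub>R f (X \<omega>))" .
  have "(\<integral>\<omega>. indicator {\<omega>\<in>space M. P \<omega>} \<omega> *\<^sub>R f (X \<omega>) \<partial>M)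
      = integral\<^sup>L (density M (\<lambda>\<omega>. ennreal (indicator {\<omega>\<in>space M. P \<omega>} \<omega>))) (\<lambda>\<omega>. f (X \<omega>))"
    using fX iP by (subst integral_density) auto
  also have "\<dots> = integral\<^sup>L (distr (density M (\<lambda>\<omega>. ennreal (indicator {\<omega>\<in>space M. P \<omega>} \<omega>))) S X) f"
    using Xd1 f by (simp add: integral_distr)
  also have "\<dots> = integral\<^sup>L (distr (density M (\<lambda>\<omega>. ennreal (p (X \<omega>)))) S X) f"
    using eq by simp
  also have "\<dots> = integral\<^sup>L (density M (\<lambda>\<omega>. ennreal (p (X \<omega>)))) (\<lambda>\<omega>. f (X \<omega>))"
    using Xd2 f by (simp add: integral_distr)
  also have "\<dots> = (\<integral>\<omega>. p (X \<omega>) *\<^sub>R f (X \<omega>) \<partial>M)"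
    using fX pX ae by (subst integral_density) auto
  finally show "(\<integral>\<omega>. indicator {\<omega>\<in>space M. P \<omega>} \<omega> *\<^sub>R f (X \<omega>) \<partial>M)
           = (\<integral>\<omega>. p (X \<omega>) *\<^sub>R f (X \<omega>) \<partial>M)" .
qed

definition approx :: "nat \<Rightarrow> real \<Rightarrow> real" where
  "approx n t = (if \<bar>t\<bar> \<le> real n then real_of_int \<lceil>2^n * t\<rceil> / 2^n else 0)"

lemma approx_bounds:
  assumes "\<bar>t\<bar> \<le> real n"
  shows "t \<le> approx n t" "approx n t \<le> t + inverse (2^n)"
proof -
  have p: "(0::real) < 2^n" by simp
  have "2^n * t \<le> real_of_int \<lceil>2^n * t\<rceil>" by (rule le_of_int_ceiling)
  then show "t \<le> approx n t" using assms p by (simp add: approx_def le_divide_eq mult.commute)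
  have "real_of_int \<lceil>2^n * t\<rceil> \<le> 2^n * t + 1" by linarith
  then have "real_of_int \<lceil>2^n * t\<rceil> / 2^n \<le> (2^n * t + 1) / 2^n"
    using p by (intro divide_right_mono) auto
  also have "\<dots> = t + inverse (2^n)" using p by (simp add: field_simps)
  finally show "approx n t \<le> t + inverse (2^n)" using assms by (simp add: approx_def)
qed

lemma approx_ev: "eventually (\<lambda>n. t \<le> approx n t \<and> approx n t \<le> t + inverse (2^n)) sequentially"
proof -
  have "\<forall>n\<ge>nat \<lceil>\<bar>t\<bar>\<rceil>. t \<le> approx n t \<and> approx n t \<le> t + inverse (2^n)"
  proof (intro allI impI)
    fix n assume "nat \<lceil>\<bar>t\<bar>\<rceil> \<le> n"
    then have "\<bar>t\<bar> \<le> real n" by linarith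
    then show "t \<le> approx n t \<and> approx n t \<le> t + inverse (2^n)" using approx_bounds by auto
  qed
  then show ?thesis unfolding eventually_sequentially by blast
qed

lemma approx_lim: "(\<lambda>n. approx n t) \<longlonglongrightarrow> t"
proof (rule tendsto_sandwich[of "\<lambda>n. t" _ _ "\<lambda>n. t + inverse (2^n)"])
  show "eventually (\<lambda>n. t \<le> approx n t) sequentially" using approx_ev[of t] by (auto elim: eventually_mono)
  show "eventually (\<lambda>n. approx n t \<le> t + inverse (2^n)) sequentially" using approx_ev[of t] by (auto elim: eventually_mono)
  show "(\<lambda>n. t) \<longlonglongrightarrow> t" by simp
  have "(\<lambda>n. t + inverse ((2::real)^n)) \<longlonglongrightarrow> t + 0"
    by (intro tendsto_add tendsto_const LIMSEQ_inverse_realpow_zero) auto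
  then show "(\<lambda>n. t + inverse ((2::real)^n)) \<longlonglongrightarrow> t" by simp
qed

lemma approx_range: "approx n t \<in> insert 0 ((\<lambda>j. real_of_int j / 2^n) ` {-(2^n * int n) .. 2^n * int n})"
proof (cases "\<bar>t\<bar> \<le> real n")
  case True
  have p: "(0::real) < 2^n" by simp
  have a: "2^n * t \<le> 2^n * real n" using True p by (intro mult_left_mono) auto
  have u: "\<lceil>2^n * t\<rceil> \<le> 2^n * int n" using a by (subst ceiling_le_iff) simp
  have "2^n * (- real n) \<le> 2^n * t" using True p by (intro mult_left_mono) auto
  then have b: "- (2^n * real n) \<le> 2^n * t" by simp
  have l: "-(2^n * int n) \<le> \<lceil>2^n * t\<rceil>" using b by (subst le_ceiling_iff) simp
  show ?thesis using True u l by (auto simp: approx_def)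
next
  case False then show ?thesis by (simp add: approx_def)
qed

lemma finite_approx_range: "finite (insert 0 ((\<lambda>j. real_of_int j / 2^n) ` {-(2^n * int n) .. 2^n * int n}))"
  by simp

lemma approx_meas[measurable]: "approx n \<in> borel_measurable borel"
  unfolding approx_def by measurable

lemma meas_Gcomp:
  fixes \<psi> :: "'x \<Rightarrow> real"
  assumes psi: "\<psi> \<in> borel_measurable S" and R: "finite R" "\<forall>x\<in>space S. \<psi> x \<in> R"
    and G: "\<And>c. G c \<in> borel_measurable S"
  shows "(\<lambda>x. G (\<psi> x) x) \<in> borel_measurable S"
proof -
  have psiR: "\<psi> \<in> S \<rightarrow>\<^sub>M count_space R"
  proof -
    have "\<psi> -` {a} \<inter> space S \<in> sets S" for a
    proof -
      have "{x\<in>space S. \<psi> x = a} \<in> sets S" using psi by measurable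
      moreover have "\<psi> -` {a} \<inter> space S = {x\<in>space S. \<psi> x = a}" by auto
      ultimately show ?thesis by simp
    qed
    then show ?thesis using R by (subst measurable_count_space_eq2) auto
  qed
  show ?thesis
    by (rule measurable_compose_countable'[OF _ psiR countable_finite[OF R(1)]]) (rule G)
qed

lemma cdf_basic:
  assumes "cond_cdf M S X V G"
  shows "\<And>y. cond_version M S X (\<lambda>\<omega>. V \<omega> \<le> y) (G y)"
    "\<And>x y. x \<in> space S \<Longrightarrow> 0 \<le> G y x \<and> G y x \<le> 1"
    "\<And>x y. x \<in> space S \<Longrightarrow> continuous (at_right y) (\<lambda>t. G t x)"
    "X \<in> measurable M S" "V \<in> borel_measurable M" "\<And>y. G y \<in> borel_measurable S"
proof -
  show cv: "\<And>y. cond_version M S X (\<lambda>\<omega>. V \<omega> \<le> y) (G y)" using assms unfolding cond_cdf_def by auto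
  show "\<And>x y. x \<in> space S \<Longrightarrow> 0 \<le> G y x \<and> G y x \<le> 1"
    "\<And>x y. x \<in> space S \<Longrightarrow> continuous (at_right y) (\<lambda>t. G t x)"
    using assms unfolding cond_cdf_def by auto
  show "X \<in> measurable M S" using cv_basic(1)[OF cv[of 0]] .
  show "\<And>y. G y \<in> borel_measurable S" using cv_basic(3)[OF cv] .
  show "V \<in> borel_measurable M"
    using cv_basic(2)[OF cv] by (subst borel_measurable_iff_le) auto
qed

lemma cdf_simple:
  assumes PS: "prob_space M" and cc: "cond_cdf M S X V G"
    and psi: "\<psi> \<in> borel_measurable S" and R: "finite R" "\<forall>x\<in>space S. \<psi> x \<in> R"
  shows "cond_version M S X (\<lambda>\<omega>. V \<omega> \<le> \<psi> (X \<omega>)) (\<lambda>x. G (\<psi> x) x)"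
proof -
  interpret prob_space M by fact
  note c = cdf_basic[OF cc]
  have Gm: "(\<lambda>x. G (\<psi> x) x) \<in> borel_measurable S" by (rule meas_Gcomp[OF psi R c(6)])
  have XS: "\<And>\<omega>. \<omega> \<in> space M \<Longrightarrow> X \<omega> \<in> space S" using c(4) by (meson measurable_space)
  have set: "{\<omega>\<in>space M. V \<omega> \<le> \<psi> (X \<omega>)} \<in> sets M" using c(4,5) psi by measurable
  have GX: "(\<lambda>\<omega>. G (\<psi> (X \<omega>)) (X \<omega>)) \<in> borel_measurable M" using Gm c(4) by measurable
  have int: "integrable M (\<lambda>\<omega>. G (\<psi> (X \<omega>)) (X \<omega>))"
    by (rule integrable_const_bound[where B=1]) (use GX XS c(2) in \<open>auto intro!: AE_I2\<close>)
  have id: "measure M ({\<omega>\<in>space M. V \<omega> \<le> \<psi> (X \<omega>)} \<inter> (X -` B \<inter> space M))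
       = (\<integral>\<omega>. G (\<psi> (X \<omega>)) (X \<omega>) * indicator (X -` B \<inter> space M) \<omega> \<partial>M)" if B: "B \<in> sets S" for B
  proof -
    define C where "C c = {\<omega>\<in>space M. V \<omega> \<le> c} \<inter> (X -` (B \<inter> {x\<in>space S. \<psi> x = c}) \<inter> space M)" for c
    have Bc: "B \<inter> {x\<in>space S. \<psi> x = c} \<in> sets S" for c using B psi by measurable
    have Cs: "C c \<in> sets M" for c
      unfolding C_def by (rule sets.Int[OF cv_basic(2)[OF c(1)[of c]] measurable_sets[OF c(4) Bc]])
    have "{\<omega>\<in>space M. V \<omega> \<le> \<psi> (X \<omega>)} \<inter> (X -` B \<inter> space M) = (\<Union>c\<in>R. C c)"
      using XS R(2) by (auto simp: C_def)
    moreover have "measure M (\<Union>c\<in>R. C c) = (\<Sum>c\<in>R. measure M (C c))"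
    proof (rule finite_measure_finite_Union)
      show "finite R" by (rule R(1))
      show "C ` R \<subseteq> events" using Cs by auto
      show "disjoint_family_on C R" unfolding disjoint_family_on_def C_def by auto
    qed
    ultimately have "measure M ({\<omega>\<in>space M. V \<omega> \<le> \<psi> (X \<omega>)} \<inter> (X -` B \<inter> space M)) = (\<Sum>c\<in>R. measure M (C c))"
      by simp
    also have "\<dots> = (\<Sum>c\<in>R. \<integral>\<omega>. G c (X \<omega>) * indicator (X -` (B \<inter> {x\<in>space S. \<psi> x = c}) \<inter> space M) \<omega> \<partial>M)"
      unfolding C_def using cv_basic(5)[OF c(1) Bc] by simp
    also have "\<dots> = (\<integral>\<omega>. (\<Sum>c\<in>R. G c (X \<omega>) * indicator (X -` (B \<inter> {x\<in>space S. \<psi> x = c}) \<inter> space M) \<omega>) \<partial>M)"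
    proof (rule Bochner_Integration.integral_sum[symmetric])
      fix c
      have "X -` (B \<inter> {x\<in>space S. \<psi> x = c}) \<inter> space M \<in> sets M" by (rule measurable_sets[OF c(4) Bc])
      then show "integrable M (\<lambda>\<omega>. G c (X \<omega>) * indicator (X -` (B \<inter> {x\<in>space S. \<psi> x = c}) \<inter> space M) \<omega>)"
        using cv_basic(4)[OF c(1)[of c]] by (intro integrable_real_mult_indicator) auto
    qed
    also have "\<dots> = (\<integral>\<omega>. G (\<psi> (X \<omega>)) (X \<omega>) * indicator (X -` B \<inter> space M) \<omega> \<partial>M)"
    proof (rule Bochner_Integration.integral_cong[OF refl])
      fix \<omega> assume w: "\<omega> \<in> space M"
      have "(\<Sum>c\<in>R. G c (X \<omega>) * indicator (X -` (B \<inter> {x\<in>space S. \<psi> x = c}) \<inter> space M) \<omega>)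
          = (\<Sum>c\<in>R. if \<psi> (X \<omega>) = c then G (\<psi> (X \<omega>)) (X \<omega>) * indicator (X -` B \<inter> space M) \<omega> else 0)"
        using w XS[OF w] by (intro sum.cong) (auto simp: indicator_def)
      also have "\<dots> = G (\<psi> (X \<omega>)) (X \<omega>) * indicator (X -` B \<inter> space M) \<omega>"
        using R XS[OF w] by (simp add: sum.delta')
      finally show "(\<Sum>c\<in>R. G c (X \<omega>) * indicator (X -` (B \<inter> {x\<in>space S. \<psi> x = c}) \<inter> space M) \<omega>)
          = G (\<psi> (X \<omega>)) (X \<omega>) * indicator (X -` B \<inter> space M) \<omega>" .
    qed
    finally show ?thesis .
  qed
  show ?thesis unfolding cond_version_def using c(4) set Gm int id by blast
qed

lemma rc_seq:
  fixes f :: "real \<Rightarrow> real"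
  assumes "continuous (at_right t) f"
  shows "(\<lambda>n. f (approx n t)) \<longlonglongrightarrow> f t"
proof (rule tendstoI)
  fix e :: real assume e: "0 < e"
  have "(f \<longlongrightarrow> f t) (at_right t)" using assms by (simp add: continuous_within)
  then have "eventually (\<lambda>s. dist (f s) (f t) < e) (at_right t)" using e by (rule tendstoD)
  then obtain b where b: "b > t" "\<And>s. s > t \<Longrightarrow> s < b \<Longrightarrow> dist (f s) (f t) < e"
    unfolding eventually_at_right_field by blast
  have "eventually (\<lambda>n. approx n t < b) sequentially"
    using approx_lim[of t] b(1) by (rule order_tendstoD)
  moreover have "eventually (\<lambda>n. t \<le> approx n t) sequentially"
    using approx_ev[of t] by (auto elim: eventually_mono)
  ultimately show "eventually (\<lambda>n. dist (f (approx n t)) (f t) < e) sequentially"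
  proof eventually_elim
    case (elim n)
    show ?case
    proof (cases "approx n t = t")
      case True then show ?thesis using e by simp
    next
      case False then show ?thesis using elim b(2) by auto
    qed
  qed
qed

lemma cdf_random:
  assumes PS: "prob_space M" and cc: "cond_cdf M S X V G"
    and phi: "\<phi> \<in> borel_measurable S"
  shows "cond_version M S X (\<lambda>\<omega>. V \<omega> \<le> \<phi> (X \<omega>)) (\<lambda>x. G (\<phi> x) x)"
proof -
  interpret prob_space M by fact
  note c = cdf_basic[OF cc]
  define R where "R n = insert 0 ((\<lambda>j. real_of_int j / 2^n) ` {-(2^n * int n) .. 2^n * int n})" for n :: nat
  have R: "finite (R n)" "\<forall>x\<in>space S. approx n (\<phi> x) \<in> R n" for n
    unfolding R_def using approx_range by auto
  have am: "(\<lambda>x. approx n (\<phi> x)) \<in> borel_measurable S" for n using phi by measurable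
  note simp_n = cdf_simple[OF PS cc am R] 
  have XS: "\<And>\<omega>. \<omega> \<in> space M \<Longrightarrow> X \<omega> \<in> space S" using c(4) by (meson measurable_space)
  have Gn: "(\<lambda>x. G (approx n (\<phi> x)) x) \<in> borel_measurable S" for n
    by (rule meas_Gcomp[OF am R c(6)])
  have Gm: "(\<lambda>x. G (\<phi> x) x) \<in> borel_measurable S"
  proof (rule borel_measurable_LIMSEQ_real[OF _ Gn])
    fix x assume "x \<in> space S"
    then show "(\<lambda>n. G (approx n (\<phi> x)) x) \<longlonglongrightarrow> G (\<phi> x) x" using c(3) by (intro rc_seq) auto
  qed
  have set: "{\<omega>\<in>space M. V \<omega> \<le> \<phi> (X \<omega>)} \<in> sets M" using c(4,5) phi by measurable
  have GX: "(\<lambda>\<omega>. G (\<phi> (X \<omega>)) (X \<omega>)) \<in> borel_measurable M" using Gm c(4) by measurable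
  have int: "integrable M (\<lambda>\<omega>. G (\<phi> (X \<omega>)) (X \<omega>))"
    by (rule integrable_const_bound[where B=1]) (use GX XS c(2) in \<open>auto intro!: AE_I2\<close>)
  have id: "measure M ({\<omega>\<in>space M. V \<omega> \<le> \<phi> (X \<omega>)} \<inter> (X -` B \<inter> space M))
       = (\<integral>\<omega>. G (\<phi> (X \<omega>)) (X \<omega>) * indicator (X -` B \<inter> space M) \<omega> \<partial>M)" if B: "B \<in> sets S" for B
  proof -
    have XB: "X -` B \<inter> space M \<in> sets M" by (rule measurable_sets[OF c(4) B])
    have mi: "\<And>A. A \<subseteq> space M \<Longrightarrow> measure M A = (\<integral>\<omega>. indicator A \<omega> \<partial>M)"
      by (simp add: integral_indicator Int_absorb2)
    define An where "An n = {\<omega>\<in>space M. V \<omega> \<le> approx n (\<phi> (X \<omega>))} \<inter> (X -` B \<inter> space M)" for n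
    define A where "A = {\<omega>\<in>space M. V \<omega> \<le> \<phi> (X \<omega>)} \<inter> (X -` B \<inter> space M)"
    have eqn: "measure M (An n) = (\<integral>\<omega>. G (approx n (\<phi> (X \<omega>))) (X \<omega>) * indicator (X -` B \<inter> space M) \<omega> \<partial>M)" for n
      using cv_basic(5)[OF simp_n B] unfolding An_def by simp
    have L1: "(\<lambda>n. measure M (An n)) \<longlonglongrightarrow> measure M A"
    proof -
      have "(\<lambda>n. \<integral>\<omega>. (indicator (An n) \<omega> :: real) \<partial>M) \<longlonglongrightarrow> (\<integral>\<omega>. (indicator A \<omega> :: real) \<partial>M)"
      proof (rule integral_dominated_convergence[where w = "\<lambda>_. 1"])
        show "(indicator A :: 'a \<Rightarrow> real) \<in> borel_measurable M" unfolding A_def using set XB by measurable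
        show "(indicator (An n) :: 'a \<Rightarrow> real) \<in> borel_measurable M" for n
        proof -
          have "{\<omega>\<in>space M. V \<omega> \<le> approx n (\<phi> (X \<omega>))} \<in> sets M" using c(4,5) am by measurable
          then show ?thesis unfolding An_def using XB by measurable
        qed
        show "integrable M (\<lambda>_. 1::real)" by simp
        show "AE x in M. norm (indicator (An n) x :: real) \<le> 1" for n by (rule AE_I2) (auto simp: indicator_def)
        show "AE \<omega> in M. (\<lambda>n. indicator (An n) \<omega> :: real) \<longlonglongrightarrow> indicator A \<omega>"
        proof (rule AE_I2)
          fix \<omega> assume w: "\<omega> \<in> space M"
          show "(\<lambda>n. indicator (An n) \<omega> :: real) \<longlonglongrightarrow> indicator A \<omega>"
          proof (cases "V \<omega> \<le> \<phi> (X \<omega>)")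
            case True
            have "eventually (\<lambda>n. \<phi> (X \<omega>) \<le> approx n (\<phi> (X \<omega>))) sequentially"
              using approx_ev[of "\<phi> (X \<omega>)"] by (auto elim: eventually_mono)
            then have "eventually (\<lambda>n. (indicator (An n) \<omega> :: real) = indicator A \<omega>) sequentially"
              by (rule eventually_mono) (use True w in \<open>auto simp: An_def A_def indicator_def\<close>)
            then show ?thesis by (rule tendsto_eventually)
          next
            case False
            have "eventually (\<lambda>n. approx n (\<phi> (X \<omega>)) < V \<omega>) sequentially"
              using approx_lim[of "\<phi> (X \<omega>)"] False by (intro order_tendstoD) auto
            then have "eventually (\<lambda>n. (indicator (An n) \<omega> :: real) = indicator A \<omega>) sequentially"
              by (rule eventually_mono) (use False w in \<open>auto simp: An_def A_def indicator_def\<close>)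
            then show ?thesis by (rule tendsto_eventually)
          qed
        qed
      qed
      moreover have "measure M (An n) = (\<integral>\<omega>. (indicator (An n) \<omega> :: real) \<partial>M)" for n
        by (rule mi) (auto simp: An_def)
      moreover have "measure M A = (\<integral>\<omega>. (indicator A \<omega> :: real) \<partial>M)"
        by (rule mi) (auto simp: A_def)
      ultimately show ?thesis by presburger
    qed
    have L2: "(\<lambda>n. \<integral>\<omega>. G (approx n (\<phi> (X \<omega>))) (X \<omega>) * indicator (X -` B \<inter> space M) \<omega> \<partial>M)
        \<longlonglongrightarrow> (\<integral>\<omega>. G (\<phi> (X \<omega>)) (X \<omega>) * indicator (X -` B \<inter> space M) \<omega> \<partial>M)"
    proof (rule integral_dominated_convergence[where w = "\<lambda>_. 1"])
      show "(\<lambda>\<omega>. G (\<phi> (X \<omega>)) (X \<omega>) * indicator (X -` B \<inter> space M) \<omega>) \<in> borel_measurable M"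
        using GX XB by measurable
      show "(\<lambda>\<omega>. G (approx n (\<phi> (X \<omega>))) (X \<omega>) * indicator (X -` B \<inter> space M) \<omega>) \<in> borel_measurable M" for n
        using Gn[of n] c(4) XB by measurable
      show "integrable M (\<lambda>_. 1::real)" by simp
      show "AE \<omega> in M. norm (G (approx n (\<phi> (X \<omega>))) (X \<omega>) * indicator (X -` B \<inter> space M) \<omega>) \<le> 1" for n
        by (rule AE_I2) (use XS c(2) in \<open>auto simp: indicator_def\<close>)
      show "AE \<omega> in M. (\<lambda>n. G (approx n (\<phi> (X \<omega>))) (X \<omega>) * indicator (X -` B \<inter> space M) \<omega>)
             \<longlonglongrightarrow> G (\<phi> (X \<omega>)) (X \<omega>) * indicator (X -` B \<inter> space M) \<omega>"
      proof (rule AE_I2)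
        fix \<omega> assume w: "\<omega> \<in> space M"
        have "(\<lambda>n. G (approx n (\<phi> (X \<omega>))) (X \<omega>)) \<longlonglongrightarrow> G (\<phi> (X \<omega>)) (X \<omega>)"
          by (rule rc_seq) (use c(3) XS w in auto)
        then show "(\<lambda>n. G (approx n (\<phi> (X \<omega>))) (X \<omega>) * indicator (X -` B \<inter> space M) \<omega>)
             \<longlonglongrightarrow> G (\<phi> (X \<omega>)) (X \<omega>) * indicator (X -` B \<inter> space M) \<omega>"
          by (rule tendsto_mult_right)
      qed
    qed
    have "(\<lambda>n. measure M (An n)) \<longlonglongrightarrow> (\<integral>\<omega>. G (\<phi> (X \<omega>)) (X \<omega>) * indicator (X -` B \<inter> space M) \<omega> \<partial>M)"
      using L2 unfolding eqn .
    with L1 show ?thesis unfolding A_def using LIMSEQ_unique by blast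
  qed
  show ?thesis unfolding cond_version_def using c(4) set Gm int id by blast
qed




declare One_nat_def[simp del]

locale L17 =

  fixes M :: "'w measure" and K :: nat
    and A :: "nat \<Rightarrow> 'w \<Rightarrow> bool" and L :: "nat \<Rightarrow> 'w \<Rightarrow> 'l" and N :: "'l measure"
    and Y :: "'w \<Rightarrow> real" and Ya :: "(nat \<Rightarrow> bool) \<Rightarrow> 'w \<Rightarrow> real"
    and ymin ymax :: real
    and NZ :: "'z measure" and zf :: "'l \<Rightarrow> 'z"
    and h :: "(nat \<Rightarrow> bool) \<Rightarrow> 'z \<Rightarrow> 'th \<Rightarrow> real"
    and d :: "(nat \<Rightarrow> bool) \<Rightarrow> 'z \<Rightarrow> 'th \<Rightarrow> 'v::euclidean_space"
    and \<pi> :: "nat \<Rightarrow> (nat \<Rightarrow> bool) \<Rightarrow> (nat \<Rightarrow> 'l) \<Rightarrow> 'p \<Rightarrow> real" and \<alpha>0 :: "nat \<Rightarrow> 'p"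
    and ptrue :: "nat \<Rightarrow> bool \<Rightarrow> ((nat \<Rightarrow> bool) \<times> (nat \<Rightarrow> 'l)) \<Rightarrow> real"
    and Fk :: "(nat \<Rightarrow> bool) \<Rightarrow> nat \<Rightarrow> real \<Rightarrow> ((nat \<Rightarrow> bool) \<times> (nat \<Rightarrow> 'l)) \<Rightarrow> real"
    and FZ :: "(nat \<Rightarrow> bool) \<Rightarrow> real \<Rightarrow> 'z \<Rightarrow> real"
    and cw :: "nat \<Rightarrow> real \<Rightarrow> (nat \<Rightarrow> bool) \<Rightarrow> (nat \<Rightarrow> 'l) \<Rightarrow> 'g \<Rightarrow> real" and \<gamma> :: "nat \<Rightarrow> 'g"
    and q :: real and \<theta>0 :: 'th
  assumes P: "prob_space M"
    and K: "K \<ge> 1"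
    and measA: "\<forall>k\<in>{1..K}. A k \<in> measurable M (count_space UNIV)"
    and measL: "\<forall>k\<in>{1..K}. L k \<in> measurable M N"
    and measY: "Y \<in> borel_measurable M"
    and measYa: "\<forall>a\<in>regimes K. Ya a \<in> borel_measurable M"
    and Ya_cont: "\<forall>a\<in>regimes K. (\<forall>\<omega>\<in>space M. Ya a \<omega> \<in> {ymin..ymax})
                     \<and> (\<forall>y. measure M {\<omega>\<in>space M. Ya a \<omega> = y} = 0)"
    and measZ: "zf \<in> measurable N NZ"
    and meas_h: "\<forall>a \<theta>. (\<lambda>z. h a z \<theta>) \<in> borel_measurable NZ"
    and meas_d: "\<forall>a \<theta>. (\<lambda>z. d a z \<theta>) \<in> borel_measurable NZ"
    and A1: "\<forall>a\<in>regimes K. \<forall>\<omega>\<in>space M. abar A K \<omega> = a \<longrightarrow> Ya a \<omega> = Y \<omega>"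
    and ptrue: "\<forall>k\<in>{1..K}. \<forall>b. cond_version M (hist_space N k)
                  (\<lambda>\<omega>. (abar A (k - 1) \<omega>, lbar L k \<omega>)) (\<lambda>\<omega>. A k \<omega> = b) (ptrue k b)"
    and A3: "\<forall>k\<in>{1..K}. AE \<omega> in M. \<forall>b. ptrue k b (abar A (k - 1) \<omega>, lbar L k \<omega>) > 0"
    and pi_correct: "\<forall>k\<in>{1..K}. \<forall>a l. \<pi> k a l (\<alpha>0 k) = ptrue k (a k) (trunc (k - 1) a, l)"
    and Fk: "\<forall>a\<in>regimes K. \<forall>k\<in>{1..K}. cond_cdf M (hist_space N k)
                  (\<lambda>\<omega>. (abar A k \<omega>, lbar L k \<omega>)) (Ya a) (Fk a k)"
    and c_correct: "\<forall>k\<in>{1..K}. \<forall>y. \<forall>a\<in>regimes K. \<forall>l. cw k y a l (\<gamma> k) = conf_true Fk k y a l"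
    and FZ: "\<forall>a\<in>regimes K. cond_cdf M NZ (\<lambda>\<omega>. zf (L 1 \<omega>)) (Ya a) (FZ a)"
    and A4: "\<forall>a\<in>regimes K. \<forall>z\<in>space NZ. \<exists>!y. FZ a y z = q"
    and d_int: "\<forall>a\<in>regimes K. integrable M (\<lambda>\<omega>. d a (zf (L 1 \<omega>)) \<theta>0)"
    and theta0: "(\<integral>\<omega>. (\<Sum>a\<in>regimes K. (FZ a (h a (zf (L 1 \<omega>)) \<theta>0) (zf (L 1 \<omega>)) - q)
                       *\<^sub>R d a (zf (L 1 \<omega>)) \<theta>0) \<partial>M) = 0"

begin

definition isf :: "nat \<Rightarrow> nat \<Rightarrow> ('w \<Rightarrow> 'b::topological_space) \<Rightarrow> bool" where
  "isf m k \<psi> \<longleftrightarrow> (\<exists>f \<in> borel_measurable (hist_space N k). \<forall>\<omega>\<in>space M. \<psi> \<omega> = f (abar A m \<omega>, lbar L k \<omega>))"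

lemma trunc_abar: "m \<le> k \<Longrightarrow> trunc m (abar A k \<omega>) = abar A m \<omega>"
  by (auto simp: trunc_def abar_def fun_eq_iff)

lemma restrict_lbar: "j \<le> k \<Longrightarrow> restrict (lbar L k \<omega>) {1..j} = lbar L j \<omega>"
  by (auto simp: lbar_def fun_eq_iff restrict_def)

lemma trunc_trunc: "m \<le> k \<Longrightarrow> trunc m (trunc k a) = trunc m a"
  by (auto simp: trunc_def fun_eq_iff)

lemma abar_0: "abar A 0 \<omega> = trunc 0 a"
  by (auto simp: trunc_def abar_def fun_eq_iff)

lemma abar_step:
  assumes "1 \<le> k"
  shows "abar A k \<omega> = trunc k a \<longleftrightarrow> abar A (k-1) \<omega> = trunc (k-1) a \<and> A k \<omega> = a k"
proof
  assume h: "abar A k \<omega> = trunc k a"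
  have "abar A (k-1) \<omega> = trunc (k-1) a" using trunc_abar[of "k-1" k \<omega>] h trunc_trunc[of "k-1" k a] by simp
  moreover have "A k \<omega> = a k" using fun_cong[OF h, of k] assms by (simp add: abar_def trunc_def)
  ultimately show "abar A (k-1) \<omega> = trunc (k-1) a \<and> A k \<omega> = a k" by simp
next
  assume h: "abar A (k-1) \<omega> = trunc (k-1) a \<and> A k \<omega> = a k"
  show "abar A k \<omega> = trunc k a"
  proof
    fix i
    show "abar A k \<omega> i = trunc k a i"
    proof (cases "i = k")
      case True then show ?thesis using h assms by (simp add: abar_def trunc_def)
    next
      case False
      then show ?thesis using fun_cong[OF conjunct1[OF h], of i] by (auto simp: abar_def trunc_def)
    qed
  qed
qed

lemma abar_flip:
  assumes "1 \<le> k" "abar A (k-1) \<omega> = trunc (k-1) a" "A k \<omega> = (\<not> a k)"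
  shows "abar A k \<omega> = (trunc k a)(k := \<not> a k)"
proof
  fix i
  show "abar A k \<omega> i = ((trunc k a)(k := \<not> a k)) i"
  proof (cases "i = k")
    case True then show ?thesis using assms by (simp add: abar_def trunc_def)
  next
    case False
    then show ?thesis using fun_cong[OF assms(2), of i] by (auto simp: abar_def trunc_def)
  qed
qed

lemma abar_regimes: "abar A K \<omega> \<in> regimes K"
  by (auto simp: regimes_def abar_def)

lemma trunc_regimes: "a \<in> regimes K \<Longrightarrow> trunc K a = a"
  by (auto simp: regimes_def trunc_def fun_eq_iff)

lemma finite_regimes: "finite (regimes n)"
proof -
  have "regimes n \<subseteq> (\<lambda>S i. i \<in> S) ` Pow {1..n}"
  proof
    fix a assume "a \<in> regimes n"
    then have "a = (\<lambda>i. i \<in> {i. a i})" "{i. a i} \<in> Pow {1..n}" by (auto simp: regimes_def)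
    then show "a \<in> (\<lambda>S i. i \<in> S) ` Pow {1..n}" by blast
  qed
  then show ?thesis by (rule finite_subset) auto
qed

lemma a0_reg: "(\<lambda>_. False) \<in> regimes K" by (simp add: regimes_def)

lemma measX: "k \<in> {1..K} \<Longrightarrow> (\<lambda>\<omega>. (abar A k \<omega>, lbar L k \<omega>)) \<in> M \<rightarrow>\<^sub>M hist_space N k"
  using Fk a0_reg cdf_basic(4) by blast

lemma measH: "k \<in> {1..K} \<Longrightarrow> (\<lambda>\<omega>. (abar A (k-1) \<omega>, lbar L k \<omega>)) \<in> M \<rightarrow>\<^sub>M hist_space N k"
  using ptrue cv_basic(1) by blast

lemma mtrans:
  assumes "j \<le> k"
  shows "(\<lambda>x. (trunc m (fst x), restrict (snd x) {1..j})) \<in> hist_space N k \<rightarrow>\<^sub>M hist_space N j"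
  unfolding hist_space_def
proof (rule measurable_Pair)
  show "(\<lambda>x. trunc m (fst x)) \<in> count_space UNIV \<Otimes>\<^sub>M Pi\<^sub>M {1..k} (\<lambda>i. N) \<rightarrow>\<^sub>M count_space UNIV"
    by (rule measurable_compose[OF measurable_fst]) simp
  show "(\<lambda>x. restrict (snd x) {1..j}) \<in> count_space UNIV \<Otimes>\<^sub>M Pi\<^sub>M {1..k} (\<lambda>i. N) \<rightarrow>\<^sub>M Pi\<^sub>M {1..j} (\<lambda>i. N)"
    by (rule measurable_compose[OF measurable_snd measurable_restrict_subset]) (use assms in auto)
qed

lemma isf_mono:
  assumes "isf m k \<psi>" "m \<le> m'" "k \<le> k'"
  shows "isf m' k' \<psi>"
proof -
  obtain f where f: "f \<in> borel_measurable (hist_space N k)" "\<forall>\<omega>\<in>space M. \<psi> \<omega> = f (abar A m \<omega>, lbar L k \<omega>)"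
    using assms(1) unfolding isf_def by blast
  let ?g = "\<lambda>x. f (trunc m (fst x), restrict (snd x) {1..k})"
  have "?g \<in> borel_measurable (hist_space N k')"
    by (rule measurable_compose[OF mtrans[OF assms(3)] f(1)])
  moreover have "\<forall>\<omega>\<in>space M. \<psi> \<omega> = ?g (abar A m' \<omega>, lbar L k' \<omega>)"
    using f(2) trunc_abar[OF assms(2)] restrict_lbar[OF assms(3)] by simp
  ultimately show ?thesis unfolding isf_def by (intro bexI[of _ ?g]) auto
qed

lemma isf_meas:
  assumes "isf m k \<psi>" "m \<le> k" "k \<in> {1..K}"
  shows "\<psi> \<in> borel_measurable M"
proof -
  have "isf k k \<psi>" by (rule isf_mono[OF assms(1)]) (use assms in auto)
  then obtain f where f: "f \<in> borel_measurable (hist_space N k)" "\<forall>\<omega>\<in>space M. \<psi> \<omega> = f (abar A k \<omega>, lbar L k \<omega>)"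
    unfolding isf_def by blast
  have "(\<lambda>\<omega>. f (abar A k \<omega>, lbar L k \<omega>)) \<in> borel_measurable M"
    by (rule measurable_compose[OF measX[OF assms(3)] f(1)])
  then show ?thesis using f(2) by (simp cong: measurable_cong)
qed

lemma isf_cong:
  assumes "isf m k \<psi>" "\<And>\<omega>. \<omega> \<in> space M \<Longrightarrow> \<psi>' \<omega> = \<psi> \<omega>"
  shows "isf m k \<psi>'"
  using assms unfolding isf_def by auto

lemma isf_l:
  assumes "u \<in> borel_measurable (Pi\<^sub>M {1..k} (\<lambda>i. N))" "\<And>\<omega>. \<omega> \<in> space M \<Longrightarrow> \<psi> \<omega> = u (lbar L k \<omega>)"
  shows "isf m k \<psi>"
proof -
  have "(\<lambda>x. u (snd x)) \<in> borel_measurable (hist_space N k)"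
    unfolding hist_space_def by (rule measurable_compose[OF measurable_snd assms(1)])
  then show ?thesis unfolding isf_def using assms(2) by (intro bexI[of _ "\<lambda>x. u (snd x)"]) auto
qed

lemma isf_ind:
  assumes "j \<le> m"
  shows "isf m k (\<lambda>\<omega>. if abar A j \<omega> = \<beta> then 1 else (0::real))"
proof -
  have "(\<lambda>x. if trunc j (fst x) = \<beta> then 1 else (0::real)) \<in> borel_measurable (hist_space N k)"
    unfolding hist_space_def
    by (rule measurable_compose[OF measurable_fst, where g = "\<lambda>\<alpha>. if trunc j \<alpha> = \<beta> then 1 else (0::real)"]) simp
  then show ?thesis unfolding isf_def using assms
    by (intro bexI[of _ "\<lambda>x. if trunc j (fst x) = \<beta> then 1 else (0::real)"]) (auto simp: trunc_abar)
qed

lemma isf_const: "isf m k (\<lambda>_. c)"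
  unfolding isf_def by (intro bexI[of _ "\<lambda>_. c"]) auto

lemma isf_mult:
  fixes \<psi>1 \<psi>2 :: "'w \<Rightarrow> real"
  assumes "isf m k \<psi>1" "isf m k \<psi>2" shows "isf m k (\<lambda>\<omega>. \<psi>1 \<omega> * \<psi>2 \<omega>)"
proof -
  obtain f1 where f1: "f1 \<in> borel_measurable (hist_space N k)" "\<forall>\<omega>\<in>space M. \<psi>1 \<omega> = f1 (abar A m \<omega>, lbar L k \<omega>)"
    using assms(1) unfolding isf_def by blast
  obtain f2 where f2: "f2 \<in> borel_measurable (hist_space N k)" "\<forall>\<omega>\<in>space M. \<psi>2 \<omega> = f2 (abar A m \<omega>, lbar L k \<omega>)"
    using assms(2) unfolding isf_def by blast
  have "(\<lambda>x. f1 x * f2 x) \<in> borel_measurable (hist_space N k)" using f1 f2 by measurable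
  then show ?thesis unfolding isf_def using f1 f2 by (intro bexI[of _ "\<lambda>x. f1 x * f2 x"]) auto
qed

lemma isf_divide:
  fixes \<psi>1 \<psi>2 :: "'w \<Rightarrow> real"
  assumes "isf m k \<psi>1" "isf m k \<psi>2" shows "isf m k (\<lambda>\<omega>. \<psi>1 \<omega> / \<psi>2 \<omega>)"
proof -
  obtain f1 where f1: "f1 \<in> borel_measurable (hist_space N k)" "\<forall>\<omega>\<in>space M. \<psi>1 \<omega> = f1 (abar A m \<omega>, lbar L k \<omega>)"
    using assms(1) unfolding isf_def by blast
  obtain f2 where f2: "f2 \<in> borel_measurable (hist_space N k)" "\<forall>\<omega>\<in>space M. \<psi>2 \<omega> = f2 (abar A m \<omega>, lbar L k \<omega>)"
    using assms(2) unfolding isf_def by blast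
  have "(\<lambda>x. f1 x / f2 x) \<in> borel_measurable (hist_space N k)" using f1 f2 by measurable
  then show ?thesis unfolding isf_def using f1 f2 by (intro bexI[of _ "\<lambda>x. f1 x / f2 x"]) auto
qed

lemma isf_scaleR:
  fixes \<psi>1 :: "'w \<Rightarrow> real" and \<psi>2 :: "'w \<Rightarrow> 'b::{second_countable_topology, real_normed_vector}"
  assumes "isf m k \<psi>1" "isf m k \<psi>2" shows "isf m k (\<lambda>\<omega>. \<psi>1 \<omega> *\<^sub>R \<psi>2 \<omega>)"
proof -
  obtain f1 where f1: "f1 \<in> borel_measurable (hist_space N k)" "\<forall>\<omega>\<in>space M. \<psi>1 \<omega> = f1 (abar A m \<omega>, lbar L k \<omega>)"
    using assms(1) unfolding isf_def by blast
  obtain f2 where f2: "f2 \<in> borel_measurable (hist_space N k)" "\<forall>\<omega>\<in>space M. \<psi>2 \<omega> = f2 (abar A m \<omega>, lbar L k \<omega>)"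
    using assms(2) unfolding isf_def by blast
  have "(\<lambda>x. f1 x *\<^sub>R f2 x) \<in> borel_measurable (hist_space N k)" using f1 f2 by measurable
  then show ?thesis unfolding isf_def using f1 f2 by (intro bexI[of _ "\<lambda>x. f1 x *\<^sub>R f2 x"]) auto
qed


definition yv where "yv a \<omega> = h a (zf (L 1 \<omega>)) \<theta>0"
definition gv where "gv a \<omega> = d a (zf (L 1 \<omega>)) \<theta>0"
definition PP where "PP a j \<omega> = (\<Prod>i\<in>{1..j}. ptrue i (a i) (trunc (i-1) a, lbar L i \<omega>))"
definition W where "W a j \<omega> = (if abar A j \<omega> = trunc j a then 1 else 0) / PP a j \<omega>"
definition Iv where "Iv a \<omega> = (if Ya a \<omega> \<le> yv a \<omega> then 1 else (0::real))"
definition pflip where "pflip a k \<omega> = ptrue k (\<not> a k) (trunc (k-1) a, lbar L k \<omega>)"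
definition cvv where "cvv a k \<omega> = conf_true Fk k (yv a \<omega>) a (lbar L k \<omega>)"
definition cp where "cp a k \<omega> = cvv a k \<omega> * pflip a k \<omega>"
definition phi where "phi a x = h a (zf (snd x 1)) \<theta>0"

lemma lbar1: "1 \<le> k \<Longrightarrow> lbar L k \<omega> 1 = L 1 \<omega>"
  by (simp add: lbar_def)

lemma comp1_meas: "1 \<le> (k::nat) \<Longrightarrow> (\<lambda>l. l 1) \<in> Pi\<^sub>M {1..k} (\<lambda>i. N) \<rightarrow>\<^sub>M N"
  by (rule measurable_component_singleton) auto

lemma lZ_meas:
  assumes "1 \<le> (k::nat)" "u \<in> borel_measurable NZ"
  shows "(\<lambda>l. u (zf (l 1))) \<in> borel_measurable (Pi\<^sub>M {1..k} (\<lambda>i. N))"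
  by (rule measurable_compose[OF measurable_compose[OF comp1_meas[OF assms(1)] measZ] assms(2)])

lemma isf_Z:
  assumes "1 \<le> k" "u \<in> borel_measurable NZ"
  shows "isf m k (\<lambda>\<omega>. u (zf (L 1 \<omega>)))"
  by (rule isf_l[OF lZ_meas[OF assms]]) (simp add: lbar1[OF assms(1)])

lemma isf_g: "1 \<le> k \<Longrightarrow> isf m k (gv a)"
  unfolding gv_def using meas_d by (intro isf_Z) auto

lemma isf_y: "1 \<le> k \<Longrightarrow> isf m k (yv a)"
  unfolding yv_def using meas_h by (intro isf_Z) auto

lemma pt_meas:
  assumes "i \<in> {1..K}" "i \<le> k"
  shows "(\<lambda>l. ptrue i b (\<beta>, restrict l {1..i})) \<in> borel_measurable (Pi\<^sub>M {1..k} (\<lambda>i. N))"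
proof -
  have p: "ptrue i b \<in> borel_measurable (hist_space N i)" using ptrue assms(1) cv_basic(3) by blast
  have "(\<lambda>l. (\<beta>, restrict l {1..i})) \<in> Pi\<^sub>M {1..k} (\<lambda>i. N) \<rightarrow>\<^sub>M hist_space N i"
    unfolding hist_space_def
    by (intro measurable_Pair measurable_const measurable_restrict_subset) (use assms in auto)
  then show ?thesis by (rule measurable_compose[OF _ p])
qed

lemma isf_PP:
  assumes "j \<le> k" "j \<le> K"
  shows "isf m k (PP a j)"
proof (rule isf_l)
  show "(\<lambda>l. \<Prod>i\<in>{1..j}. ptrue i (a i) (trunc (i-1) a, restrict l {1..i})) \<in> borel_measurable (Pi\<^sub>M {1..k} (\<lambda>i. N))"
    by (intro borel_measurable_prod pt_meas) (use assms in auto)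
  fix \<omega>
  show "PP a j \<omega> = (\<Prod>i\<in>{1..j}. ptrue i (a i) (trunc (i-1) a, restrict (lbar L k \<omega>) {1..i}))"
    unfolding PP_def using assms by (intro prod.cong refl) (simp add: restrict_lbar)
qed

lemma isf_W:
  assumes "j \<le> m" "j \<le> k" "j \<le> K"
  shows "isf m k (W a j)"
  unfolding W_def[abs_def] by (intro isf_divide isf_ind isf_PP) (use assms in auto)

lemma isf_pflip:
  assumes "k \<in> {1..K}"
  shows "isf m k (pflip a k)"
proof (rule isf_l)
  show "(\<lambda>l. ptrue k (\<not> a k) (trunc (k-1) a, restrict l {1..k})) \<in> borel_measurable (Pi\<^sub>M {1..k} (\<lambda>i. N))"
    by (rule pt_meas) (use assms in auto)
  fix \<omega>
  show "pflip a k \<omega> = ptrue k (\<not> a k) (trunc (k-1) a, restrict (lbar L k \<omega>) {1..k})"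
    unfolding pflip_def by (simp add: restrict_lbar)
qed

lemma phi_meas: "1 \<le> k \<Longrightarrow> phi a \<in> borel_measurable (hist_space N k)"
  unfolding phi_def[abs_def] hist_space_def
  by (rule measurable_compose[OF measurable_snd lZ_meas]) (use meas_h in auto)

lemma phi_X: "1 \<le> k \<Longrightarrow> phi a (\<beta>, lbar L k \<omega>) = yv a \<omega>"
  by (simp add: phi_def yv_def lbar1)

lemma CVk:
  assumes "k \<in> {1..K}" "a \<in> regimes K"
  shows "cond_version M (hist_space N k) (\<lambda>\<omega>. (abar A k \<omega>, lbar L k \<omega>))
           (\<lambda>\<omega>. Ya a \<omega> \<le> phi a (abar A k \<omega>, lbar L k \<omega>)) (\<lambda>x. Fk a k (phi a x) x)"
  by (rule cdf_random[OF P _ phi_meas]) (use Fk assms in auto)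

lemma CVZ:
  assumes "a \<in> regimes K"
  shows "cond_version M NZ (\<lambda>\<omega>. zf (L 1 \<omega>)) (\<lambda>\<omega>. Ya a \<omega> \<le> h a (zf (L 1 \<omega>)) \<theta>0) (\<lambda>z. FZ a (h a z \<theta>0) z)"
  by (rule cdf_random[OF P _ , where \<phi> = "\<lambda>z. h a z \<theta>0"]) (use FZ assms meas_h in auto)

lemma isf_cvv:
  assumes "k \<in> {1..K}" "a \<in> regimes K"
  shows "isf m k (cvv a k)"
proof (rule isf_l)
  have G: "(\<lambda>x. Fk a k (phi a x) x) \<in> borel_measurable (hist_space N k)"
    using cv_basic(3)[OF CVk[OF assms]] .
  have "(\<lambda>l. (\<beta>, restrict l {1..k})) \<in> Pi\<^sub>M {1..k} (\<lambda>i. N) \<rightarrow>\<^sub>M hist_space N k" for \<beta>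
    unfolding hist_space_def
    by (intro measurable_Pair measurable_const measurable_restrict_subset) auto
  then have "(\<lambda>l. Fk a k (phi a (\<beta>, restrict l {1..k})) (\<beta>, restrict l {1..k})) \<in> borel_measurable (Pi\<^sub>M {1..k} (\<lambda>i. N))" for \<beta>
    using measurable_compose[OF _ G] by blast
  then show "(\<lambda>l. Fk a k (phi a (trunc k a, restrict l {1..k})) (trunc k a, restrict l {1..k})
       - Fk a k (phi a ((trunc k a)(k := \<not> a k), restrict l {1..k})) ((trunc k a)(k := \<not> a k), restrict l {1..k}))
     \<in> borel_measurable (Pi\<^sub>M {1..k} (\<lambda>i. N))" by measurable
  fix \<omega>
  show "cvv a k \<omega> = Fk a k (phi a (trunc k a, restrict (lbar L k \<omega>) {1..k})) (trunc k a, restrict (lbar L k \<omega>) {1..k})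
       - Fk a k (phi a ((trunc k a)(k := \<not> a k), restrict (lbar L k \<omega>) {1..k})) ((trunc k a)(k := \<not> a k), restrict (lbar L k \<omega>) {1..k})"
    using assms by (simp add: cvv_def conf_true_def restrict_lbar phi_X)
qed

lemma Ya_meas: "a \<in> regimes K \<Longrightarrow> Ya a \<in> borel_measurable M"
  using measYa by blast

lemma yv_meas: "yv a \<in> borel_measurable M"
  by (rule isf_meas[OF isf_y[of 1 0]]) (use K in auto)

lemma gv_meas: "gv a \<in> borel_measurable M"
  by (rule isf_meas[OF isf_g[of 1 0]]) (use K in auto)

lemma Iv_meas: "a \<in> regimes K \<Longrightarrow> Iv a \<in> borel_measurable M"
  unfolding Iv_def[abs_def] using Ya_meas yv_meas by measurable


lemma isf_pt:
  assumes "k \<in> {1..K}"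
  shows "isf m k (\<lambda>\<omega>. ptrue k b (\<beta>, lbar L k \<omega>))"
proof (rule isf_l)
  show "(\<lambda>l. ptrue k b (\<beta>, restrict l {1..k})) \<in> borel_measurable (Pi\<^sub>M {1..k} (\<lambda>i. N))"
    by (rule pt_meas) (use assms in auto)
  fix \<omega>
  show "ptrue k b (\<beta>, lbar L k \<omega>) = ptrue k b (\<beta>, restrict (lbar L k \<omega>) {1..k})"
    by (simp add: restrict_lbar)
qed

lemma W0: "W a 0 \<omega> = 1"
  by (simp add: W_def PP_def abar_0[of _ a])

lemma W_nz: "W a j \<omega> \<noteq> 0 \<Longrightarrow> abar A j \<omega> = trunc j a"
  by (auto simp: W_def split: if_splits)

lemma W_step:
  assumes "1 \<le> k"
  shows "W a k \<omega> = (if A k \<omega> = a k then 1 else 0) * (W a (k-1) \<omega> / ptrue k (a k) (trunc (k-1) a, lbar L k \<omega>))"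
proof -
  obtain k' where k': "k = Suc k'" using assms by (cases k) auto
  have "PP a k \<omega> = PP a (k-1) \<omega> * ptrue k (a k) (trunc (k-1) a, lbar L k \<omega>)"
    unfolding PP_def k' by (simp add: prod.nat_ivl_Suc' )
  then show ?thesis unfolding W_def using abar_step[OF assms, of \<omega> a] by auto
qed

lemma space_hist: "(\<beta>, l) \<in> space (hist_space N k) \<longleftrightarrow> l \<in> space (Pi\<^sub>M {1..k} (\<lambda>i. N))"
  by (simp add: hist_space_def space_pair_measure)

lemma lbar_space:
  assumes "k \<in> {1..K}" "\<omega> \<in> space M"
  shows "lbar L k \<omega> \<in> space (Pi\<^sub>M {1..k} (\<lambda>i. N))"
  using measurable_space[OF measX[OF assms(1)] assms(2)] by (simp add: space_hist)

lemma Fk_bounds: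
  assumes "k \<in> {1..K}" "a \<in> regimes K" "\<omega> \<in> space M"
  shows "0 \<le> Fk a k y (\<beta>, lbar L k \<omega>) \<and> Fk a k y (\<beta>, lbar L k \<omega>) \<le> 1"
proof -
  have "(\<beta>, lbar L k \<omega>) \<in> space (hist_space N k)" using lbar_space[OF assms(1,3)] by (simp add: space_hist)
  then show ?thesis using cdf_basic(2)[of M _ _ "Ya a" "Fk a k"] Fk assms(1,2) by blast
qed

lemma cvv_bound:
  assumes "k \<in> {1..K}" "a \<in> regimes K" "\<omega> \<in> space M"
  shows "\<bar>cvv a k \<omega>\<bar> \<le> 1"
  using Fk_bounds[OF assms, of "yv a \<omega>" "trunc k a"] Fk_bounds[OF assms, of "yv a \<omega>" "(trunc k a)(k := \<not> a k)"]
  by (simp add: cvv_def conf_true_def abs_le_iff)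

lemma AE_pt01:
  assumes "k \<in> {1..K}"
  shows "AE \<omega> in M. 0 \<le> ptrue k b (abar A (k-1) \<omega>, lbar L k \<omega>) \<and> ptrue k b (abar A (k-1) \<omega>, lbar L k \<omega>) \<le> 1"
  using cv_AE_bounds[OF P, of "hist_space N k" "\<lambda>\<omega>. (abar A (k-1) \<omega>, lbar L k \<omega>)" "\<lambda>\<omega>. A k \<omega> = b" "ptrue k b"]
    ptrue assms by blast

lemma T1:
  fixes \<psi> :: "'w \<Rightarrow> 'b::{banach, second_countable_topology}"
  assumes k: "k \<in> {1..K}" and psi: "isf (k-1) k \<psi>"
  shows "integrable M (\<lambda>\<omega>. W a k \<omega> *\<^sub>R \<psi> \<omega>) = integrable M (\<lambda>\<omega>. W a (k-1) \<omega> *\<^sub>R \<psi> \<omega>)"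
    and "(\<integral>\<omega>. W a k \<omega> *\<^sub>R \<psi> \<omega> \<partial>M) = (\<integral>\<omega>. W a (k-1) \<omega> *\<^sub>R \<psi> \<omega> \<partial>M)"
proof -
  define pt' where "pt' \<omega> = ptrue k (a k) (trunc (k-1) a, lbar L k \<omega>)" for \<omega>
  have "isf (k-1) k (\<lambda>\<omega>. (W a (k-1) \<omega> / pt' \<omega>) *\<^sub>R \<psi> \<omega>)"
    unfolding pt'_def using k by (intro isf_scaleR isf_divide isf_W isf_pt psi) auto
  then obtain f where f: "f \<in> borel_measurable (hist_space N k)"
     "\<forall>\<omega>\<in>space M. (W a (k-1) \<omega> / pt' \<omega>) *\<^sub>R \<psi> \<omega> = f (abar A (k-1) \<omega>, lbar L k \<omega>)"
    unfolding isf_def by blast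
  have cv: "cond_version M (hist_space N k) (\<lambda>\<omega>. (abar A (k-1) \<omega>, lbar L k \<omega>)) (\<lambda>\<omega>. A k \<omega> = a k) (ptrue k (a k))"
    using ptrue k by blast
  have e1: "W a k \<omega> *\<^sub>R \<psi> \<omega> = indicator {\<omega>\<in>space M. A k \<omega> = a k} \<omega> *\<^sub>R f (abar A (k-1) \<omega>, lbar L k \<omega>)"
    if w: "\<omega> \<in> space M" for \<omega>
    using W_step[of k a \<omega>] k f(2) w by (auto simp: pt'_def indicator_def)
  have e2: "AE \<omega> in M. ptrue k (a k) (abar A (k-1) \<omega>, lbar L k \<omega>) *\<^sub>R f (abar A (k-1) \<omega>, lbar L k \<omega>)
             = W a (k-1) \<omega> *\<^sub>R \<psi> \<omega>"
    using A3 k AE_space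
  proof -
    have "AE \<omega> in M. \<forall>b. ptrue k b (abar A (k - 1) \<omega>, lbar L k \<omega>) > 0" using A3 k by blast
    then show ?thesis using AE_space
    proof eventually_elim
      case (elim \<omega>)
      show ?case
      proof (cases "abar A (k-1) \<omega> = trunc (k-1) a")
        case True
        then have pos: "pt' \<omega> > 0" using elim unfolding pt'_def by auto
        have ff: "f (abar A (k-1) \<omega>, lbar L k \<omega>) = (W a (k-1) \<omega> / pt' \<omega>) *\<^sub>R \<psi> \<omega>"
          using f(2) elim by simp
        have "ptrue k (a k) (abar A (k-1) \<omega>, lbar L k \<omega>) = pt' \<omega>" using True by (simp add: pt'_def)
        then show ?thesis using pos unfolding ff by simp
      next
        case False
        then have "W a (k-1) \<omega> = 0" using W_nz by blast
        then show ?thesis using f(2) elim by (metis div_0 scaleR_zero_left scaleR_zero_right)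
      qed
    qed
  qed
  have m1: "(\<lambda>\<omega>. W a k \<omega> *\<^sub>R \<psi> \<omega>) \<in> borel_measurable M"
    by (rule isf_meas[of k k]) (use k isf_mono[OF psi, of k k] in \<open>auto intro!: isf_scaleR isf_W\<close>)
  have m2: "(\<lambda>\<omega>. W a (k-1) \<omega> *\<^sub>R \<psi> \<omega>) \<in> borel_measurable M"
    by (rule isf_meas[of "k-1" k]) (use k psi in \<open>auto intro!: isf_scaleR isf_W\<close>)
  have m3: "(\<lambda>\<omega>. ptrue k (a k) (abar A (k-1) \<omega>, lbar L k \<omega>) *\<^sub>R f (abar A (k-1) \<omega>, lbar L k \<omega>)) \<in> borel_measurable M"
    using measH[OF k] cv_basic(3)[OF cv] f(1) by measurable
  note ci = cv_integral[OF P cv f(1)]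
  have i1: "integrable M (\<lambda>\<omega>. W a k \<omega> *\<^sub>R \<psi> \<omega>)
     = integrable M (\<lambda>\<omega>. indicator {\<omega>\<in>space M. A k \<omega> = a k} \<omega> *\<^sub>R f (abar A (k-1) \<omega>, lbar L k \<omega>))"
    by (intro Bochner_Integration.integrable_cong refl e1)
  have j1: "(\<integral>\<omega>. W a k \<omega> *\<^sub>R \<psi> \<omega> \<partial>M)
     = (\<integral>\<omega>. indicator {\<omega>\<in>space M. A k \<omega> = a k} \<omega> *\<^sub>R f (abar A (k-1) \<omega>, lbar L k \<omega>) \<partial>M)"
    by (intro Bochner_Integration.integral_cong refl e1)
  show "integrable M (\<lambda>\<omega>. W a k \<omega> *\<^sub>R \<psi> \<omega>) = integrable M (\<lambda>\<omega>. W a (k-1) \<omega> *\<^sub>R \<psi> \<omega>)"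
    unfolding i1 ci(1) by (rule integrable_cong_AE[OF m3 m2 e2])
  show "(\<integral>\<omega>. W a k \<omega> *\<^sub>R \<psi> \<omega> \<partial>M) = (\<integral>\<omega>. W a (k-1) \<omega> *\<^sub>R \<psi> \<omega> \<partial>M)"
    unfolding j1 ci(2) by (rule integral_cong_AE[OF m3 m2 e2])
qed


lemma T1iter:
  fixes \<psi> :: "'w \<Rightarrow> 'b::{banach, second_countable_topology}"
  assumes j: "j \<le> K" and psi: "\<And>k. k \<in> {Suc j..K} \<Longrightarrow> isf (k-1) k \<psi>"
  shows "integrable M (\<lambda>\<omega>. W a K \<omega> *\<^sub>R \<psi> \<omega>) = integrable M (\<lambda>\<omega>. W a j \<omega> *\<^sub>R \<psi> \<omega>)
       \<and> (\<integral>\<omega>. W a K \<omega> *\<^sub>R \<psi> \<omega> \<partial>M) = (\<integral>\<omega>. W a j \<omega> *\<^sub>R \<psi> \<omega> \<partial>M)"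
  using j
proof (induction rule: inc_induct)
  case base then show ?case by simp
next
  case (step n)
  have k: "Suc n \<in> {1..K}" using step by auto
  have ps: "isf (Suc n - 1) (Suc n) \<psi>" using psi[of "Suc n"] step by auto
  show ?case using T1[OF k ps, of a] step(3) by simp
qed

lemma W_meas: "j \<le> K \<Longrightarrow> W a j \<in> borel_measurable M"
  by (rule isf_meas[OF isf_W[of j "max 1 j" "max 1 j"]]) (use K in auto)

lemma int_Wg:
  assumes j: "j \<le> K" and a: "a \<in> regimes K"
  shows "integrable M (\<lambda>\<omega>. W a j \<omega> *\<^sub>R gv a \<omega>)"
proof -
  have g: "isf (k-1) k (gv a)" if "k \<in> {Suc i..K}" for k i using that by (intro isf_g) auto
  have "integrable M (\<lambda>\<omega>. W a 0 \<omega> *\<^sub>R gv a \<omega>)" using d_int a by (simp add: W0 gv_def)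
  then have "integrable M (\<lambda>\<omega>. W a K \<omega> *\<^sub>R gv a \<omega>)" using T1iter[of 0 "gv a" a] g by auto
  then show ?thesis using T1iter[OF j, of "gv a" a] g by auto
qed

lemma intb:
  assumes j: "j \<le> K" and a: "a \<in> regimes K" and b: "b \<in> borel_measurable M"
    and bb: "AE \<omega> in M. W a j \<omega> \<noteq> 0 \<longrightarrow> \<bar>b \<omega>\<bar> \<le> 1"
  shows "integrable M (\<lambda>\<omega>. W a j \<omega> *\<^sub>R (b \<omega> *\<^sub>R gv a \<omega>))"
proof (rule Bochner_Integration.integrable_bound[OF int_Wg[OF j a]])
  show "(\<lambda>\<omega>. W a j \<omega> *\<^sub>R (b \<omega> *\<^sub>R gv a \<omega>)) \<in> borel_measurable M"
    using W_meas[OF j] b gv_meas by measurable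
  show "AE \<omega> in M. norm (W a j \<omega> *\<^sub>R (b \<omega> *\<^sub>R gv a \<omega>)) \<le> norm (W a j \<omega> *\<^sub>R gv a \<omega>)"
    using bb
  proof eventually_elim
    case (elim \<omega>)
    show ?case
    proof (cases "W a j \<omega> = 0")
      case True then show ?thesis by simp
    next
      case False
      then have "\<bar>b \<omega>\<bar> \<le> 1" using elim by auto
      then have "\<bar>W a j \<omega>\<bar> * (\<bar>b \<omega>\<bar> * norm (gv a \<omega>)) \<le> \<bar>W a j \<omega>\<bar> * (1 * norm (gv a \<omega>))"
        by (intro mult_left_mono mult_right_mono) auto
      then show ?thesis by (simp add: abs_mult mult.assoc)
    qed
  qed
qed

lemma isf_Fb:
  assumes "k \<in> {1..K}" "a \<in> regimes K"
  shows "isf m k (\<lambda>\<omega>. Fk a k (yv a \<omega>) (\<beta>, lbar L k \<omega>))"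
proof (rule isf_l)
  have G: "(\<lambda>x. Fk a k (phi a x) x) \<in> borel_measurable (hist_space N k)"
    using cv_basic(3)[OF CVk[OF assms]] .
  have "(\<lambda>l. (\<beta>, restrict l {1..k})) \<in> Pi\<^sub>M {1..k} (\<lambda>i. N) \<rightarrow>\<^sub>M hist_space N k"
    unfolding hist_space_def
    by (intro measurable_Pair measurable_const measurable_restrict_subset) auto
  then show "(\<lambda>l. Fk a k (phi a (\<beta>, restrict l {1..k})) (\<beta>, restrict l {1..k})) \<in> borel_measurable (Pi\<^sub>M {1..k} (\<lambda>i. N))"
    using measurable_compose[OF _ G] by blast
  fix \<omega>
  show "Fk a k (yv a \<omega>) (\<beta>, lbar L k \<omega>) = Fk a k (phi a (\<beta>, restrict (lbar L k \<omega>) {1..k})) (\<beta>, restrict (lbar L k \<omega>) {1..k})"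
    using assms by (simp add: restrict_lbar phi_X)
qed


lemma T2:
  assumes k: "k \<in> {1..K}" and a: "a \<in> regimes K"
  shows "(\<integral>\<omega>. W a (k-1) \<omega> *\<^sub>R (Iv a \<omega> *\<^sub>R gv a \<omega>) \<partial>M)
       = (\<integral>\<omega>. W a k \<omega> *\<^sub>R (Iv a \<omega> *\<^sub>R gv a \<omega>) \<partial>M) - (\<integral>\<omega>. W a k \<omega> *\<^sub>R (cp a k \<omega> *\<^sub>R gv a \<omega>) \<partial>M)"
proof -
  have k1: "1 \<le> k" "k \<le> K" using k by auto
  note CV = CVk[OF k a]
  define FF where "FF \<omega> = Fk a k (yv a \<omega>) (abar A k \<omega>, lbar L k \<omega>)" for \<omega>
  define F1 where "F1 \<omega> = Fk a k (yv a \<omega>) (trunc k a, lbar L k \<omega>)" for \<omega>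
  define ind where "ind \<omega> = (indicator {\<omega>\<in>space M. A k \<omega> = (\<not> a k)} \<omega> :: real)" for \<omega>
  have Iind: "indicator {\<omega>\<in>space M. Ya a \<omega> \<le> phi a (abar A k \<omega>, lbar L k \<omega>)} \<omega> = Iv a \<omega>"
    if "\<omega> \<in> space M" for \<omega> using that k1 by (simp add: phi_X Iv_def indicator_def)
  have FFphi: "Fk a k (phi a (abar A k \<omega>, lbar L k \<omega>)) (abar A k \<omega>, lbar L k \<omega>) = FF \<omega>" for \<omega>
    using k1 by (simp add: phi_X FF_def)
  have cvk: "cond_version M (hist_space N k) (\<lambda>\<omega>. (abar A (k-1) \<omega>, lbar L k \<omega>)) (\<lambda>\<omega>. A k \<omega> = (\<not> a k)) (ptrue k (\<not> a k))"
    using ptrue k by blast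
  have indm: "ind \<in> borel_measurable M" unfolding ind_def[abs_def]
    using cv_basic(2)[OF cvk] by (intro borel_measurable_indicator)
  have F1m: "F1 \<in> borel_measurable M"
    unfolding F1_def[abs_def] by (rule isf_meas[OF isf_Fb[OF k a, of k]]) (use k in auto)
  have cvvm: "cvv a k \<in> borel_measurable M"
    by (rule isf_meas[OF isf_cvv[OF k a, of k]]) (use k in auto)
  have km1: "k - 1 \<le> K" using k by auto

  have "isf k k (\<lambda>\<omega>. W a (k-1) \<omega> *\<^sub>R gv a \<omega>)"
    using k1 by (intro isf_scaleR isf_W isf_g) auto
  then obtain f1 where f1: "f1 \<in> borel_measurable (hist_space N k)"
    "\<forall>\<omega>\<in>space M. W a (k-1) \<omega> *\<^sub>R gv a \<omega> = f1 (abar A k \<omega>, lbar L k \<omega>)"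
    unfolding isf_def by blast
  note ci1 = cv_integral[OF P CV f1(1)]
  have s1: "(\<integral>\<omega>. W a (k-1) \<omega> *\<^sub>R (Iv a \<omega> *\<^sub>R gv a \<omega>) \<partial>M)
      = (\<integral>\<omega>. FF \<omega> *\<^sub>R (W a (k-1) \<omega> *\<^sub>R gv a \<omega>) \<partial>M)"
  proof -
    have "(\<integral>\<omega>. W a (k-1) \<omega> *\<^sub>R (Iv a \<omega> *\<^sub>R gv a \<omega>) \<partial>M)
       = (\<integral>\<omega>. indicator {\<omega>\<in>space M. Ya a \<omega> \<le> phi a (abar A k \<omega>, lbar L k \<omega>)} \<omega> *\<^sub>R f1 (abar A k \<omega>, lbar L k \<omega>) \<partial>M)"
      by (intro Bochner_Integration.integral_cong refl) (simp add: Iind f1(2)[rule_format, symmetric])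
    also have "\<dots> = (\<integral>\<omega>. Fk a k (phi a (abar A k \<omega>, lbar L k \<omega>)) (abar A k \<omega>, lbar L k \<omega>) *\<^sub>R f1 (abar A k \<omega>, lbar L k \<omega>) \<partial>M)"
      by (rule ci1(2))
    also have "\<dots> = (\<integral>\<omega>. FF \<omega> *\<^sub>R (W a (k-1) \<omega> *\<^sub>R gv a \<omega>) \<partial>M)"
      by (intro Bochner_Integration.integral_cong refl) (simp add: FFphi f1(2)[rule_format, symmetric])
    finally show ?thesis .
  qed

  have pw: "FF \<omega> *\<^sub>R (W a (k-1) \<omega> *\<^sub>R gv a \<omega>)
      = W a (k-1) \<omega> *\<^sub>R (F1 \<omega> *\<^sub>R gv a \<omega>) - W a (k-1) \<omega> *\<^sub>R ((ind \<omega> * cvv a k \<omega>) *\<^sub>R gv a \<omega>)"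
    if w: "\<omega> \<in> space M" for \<omega>
  proof (cases "W a (k-1) \<omega> = 0")
    case True then show ?thesis by simp
  next
    case False
    then have h: "abar A (k-1) \<omega> = trunc (k-1) a" by (rule W_nz)
    have eq: "FF \<omega> = F1 \<omega> - ind \<omega> * cvv a k \<omega>"
    proof (cases "A k \<omega> = a k")
      case True
      then have "abar A k \<omega> = trunc k a" using abar_step[OF k1(1)] h by blast
      then show ?thesis using True by (simp add: FF_def F1_def ind_def)
    next
      case False
      then have "A k \<omega> = (\<not> a k)" by auto
      then have "abar A k \<omega> = (trunc k a)(k := \<not> a k)" using abar_flip[OF k1(1) h] by blast
      then show ?thesis using False w by (simp add: FF_def F1_def ind_def cvv_def conf_true_def)
    qed
    have "FF \<omega> *\<^sub>R (W a (k-1) \<omega> *\<^sub>R gv a \<omega>) = (FF \<omega> * W a (k-1) \<omega>) *\<^sub>R gv a \<omega>" by simp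
    also have "\<dots> = (W a (k-1) \<omega> * F1 \<omega> - W a (k-1) \<omega> * (ind \<omega> * cvv a k \<omega>)) *\<^sub>R gv a \<omega>"
      unfolding eq by (simp add: algebra_simps)
    also have "\<dots> = W a (k-1) \<omega> *\<^sub>R (F1 \<omega> *\<^sub>R gv a \<omega>) - W a (k-1) \<omega> *\<^sub>R ((ind \<omega> * cvv a k \<omega>) *\<^sub>R gv a \<omega>)"
      by (simp add: scaleR_left_diff_distrib)
    finally show ?thesis .
  qed
  have ia: "integrable M (\<lambda>\<omega>. W a (k-1) \<omega> *\<^sub>R (F1 \<omega> *\<^sub>R gv a \<omega>))"
    by (rule intb[OF km1 a F1m]) (use Fk_bounds[OF k a] in \<open>auto intro!: AE_I2 simp: F1_def abs_le_iff\<close>)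
  have ib: "integrable M (\<lambda>\<omega>. W a (k-1) \<omega> *\<^sub>R ((ind \<omega> * cvv a k \<omega>) *\<^sub>R gv a \<omega>))"
  proof (rule intb[OF km1 a])
    show "(\<lambda>\<omega>. ind \<omega> * cvv a k \<omega>) \<in> borel_measurable M" using indm cvvm by measurable
    show "AE \<omega> in M. W a (k-1) \<omega> \<noteq> 0 \<longrightarrow> \<bar>ind \<omega> * cvv a k \<omega>\<bar> \<le> 1"
    proof (rule AE_I2, intro impI)
      fix \<omega> assume "\<omega> \<in> space M"
      then have "\<bar>cvv a k \<omega>\<bar> \<le> 1" by (rule cvv_bound[OF k a])
      moreover have "\<bar>ind \<omega>\<bar> \<le> 1" by (simp add: ind_def indicator_def)
      ultimately have "\<bar>ind \<omega>\<bar> * \<bar>cvv a k \<omega>\<bar> \<le> 1 * 1" by (intro mult_mono) auto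
      then show "\<bar>ind \<omega> * cvv a k \<omega>\<bar> \<le> 1" by (simp add: abs_mult)
    qed
  qed
  have s2: "(\<integral>\<omega>. FF \<omega> *\<^sub>R (W a (k-1) \<omega> *\<^sub>R gv a \<omega>) \<partial>M)
      = (\<integral>\<omega>. W a (k-1) \<omega> *\<^sub>R (F1 \<omega> *\<^sub>R gv a \<omega>) \<partial>M) - (\<integral>\<omega>. W a (k-1) \<omega> *\<^sub>R ((ind \<omega> * cvv a k \<omega>) *\<^sub>R gv a \<omega>) \<partial>M)"
  proof -
    have "(\<integral>\<omega>. FF \<omega> *\<^sub>R (W a (k-1) \<omega> *\<^sub>R gv a \<omega>) \<partial>M)
      = (\<integral>\<omega>. W a (k-1) \<omega> *\<^sub>R (F1 \<omega> *\<^sub>R gv a \<omega>) - W a (k-1) \<omega> *\<^sub>R ((ind \<omega> * cvv a k \<omega>) *\<^sub>R gv a \<omega>) \<partial>M)"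
      by (intro Bochner_Integration.integral_cong refl pw)
    also have "\<dots> = (\<integral>\<omega>. W a (k-1) \<omega> *\<^sub>R (F1 \<omega> *\<^sub>R gv a \<omega>) \<partial>M) - (\<integral>\<omega>. W a (k-1) \<omega> *\<^sub>R ((ind \<omega> * cvv a k \<omega>) *\<^sub>R gv a \<omega>) \<partial>M)"
      by (rule Bochner_Integration.integral_diff[OF ia ib])
    finally show ?thesis .
  qed

  have s3: "(\<integral>\<omega>. W a (k-1) \<omega> *\<^sub>R (F1 \<omega> *\<^sub>R gv a \<omega>) \<partial>M) = (\<integral>\<omega>. W a k \<omega> *\<^sub>R (F1 \<omega> *\<^sub>R gv a \<omega>) \<partial>M)"
    unfolding F1_def using k1 by (intro T1(2)[OF k, symmetric] isf_scaleR isf_Fb[OF k a] isf_g)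

  have "isf k k (\<lambda>\<omega>. W a k \<omega> *\<^sub>R gv a \<omega>)"
    using k1 by (intro isf_scaleR isf_W isf_g) auto
  then obtain f2 where f2: "f2 \<in> borel_measurable (hist_space N k)"
    "\<forall>\<omega>\<in>space M. W a k \<omega> *\<^sub>R gv a \<omega> = f2 (abar A k \<omega>, lbar L k \<omega>)"
    unfolding isf_def by blast
  note ci2 = cv_integral[OF P CV f2(1)]
  have s4: "(\<integral>\<omega>. W a k \<omega> *\<^sub>R (F1 \<omega> *\<^sub>R gv a \<omega>) \<partial>M) = (\<integral>\<omega>. W a k \<omega> *\<^sub>R (Iv a \<omega> *\<^sub>R gv a \<omega>) \<partial>M)"
  proof -
    have "(\<integral>\<omega>. W a k \<omega> *\<^sub>R (F1 \<omega> *\<^sub>R gv a \<omega>) \<partial>M)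
       = (\<integral>\<omega>. Fk a k (phi a (abar A k \<omega>, lbar L k \<omega>)) (abar A k \<omega>, lbar L k \<omega>) *\<^sub>R f2 (abar A k \<omega>, lbar L k \<omega>) \<partial>M)"
    proof (intro Bochner_Integration.integral_cong refl)
      fix \<omega> assume w: "\<omega> \<in> space M"
      show "W a k \<omega> *\<^sub>R (F1 \<omega> *\<^sub>R gv a \<omega>) = Fk a k (phi a (abar A k \<omega>, lbar L k \<omega>)) (abar A k \<omega>, lbar L k \<omega>) *\<^sub>R f2 (abar A k \<omega>, lbar L k \<omega>)"
      proof (cases "W a k \<omega> = 0")
        case True then show ?thesis using f2(2) w by (metis scaleR_zero_left scaleR_zero_right)
      next
        case False
        then have e: "abar A k \<omega> = trunc k a" by (rule W_nz)
        have f2e: "f2 (trunc k a, lbar L k \<omega>) = W a k \<omega> *\<^sub>R gv a \<omega>"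
          using f2(2) w e by metis
        show ?thesis unfolding e f2e using k1 by (simp add: phi_X F1_def)
      qed
    qed
    also have "\<dots> = (\<integral>\<omega>. indicator {\<omega>\<in>space M. Ya a \<omega> \<le> phi a (abar A k \<omega>, lbar L k \<omega>)} \<omega> *\<^sub>R f2 (abar A k \<omega>, lbar L k \<omega>) \<partial>M)"
      by (rule ci2(2)[symmetric])
    also have "\<dots> = (\<integral>\<omega>. W a k \<omega> *\<^sub>R (Iv a \<omega> *\<^sub>R gv a \<omega>) \<partial>M)"
      by (intro Bochner_Integration.integral_cong refl) (simp add: Iind f2(2)[rule_format, symmetric])
    finally show ?thesis .
  qed

  have "isf (k-1) k (\<lambda>\<omega>. W a (k-1) \<omega> *\<^sub>R (cvv a k \<omega> *\<^sub>R gv a \<omega>))"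
    using k1 by (intro isf_scaleR isf_W isf_g isf_cvv[OF k a]) auto
  then obtain f3 where f3: "f3 \<in> borel_measurable (hist_space N k)"
    "\<forall>\<omega>\<in>space M. W a (k-1) \<omega> *\<^sub>R (cvv a k \<omega> *\<^sub>R gv a \<omega>) = f3 (abar A (k-1) \<omega>, lbar L k \<omega>)"
    unfolding isf_def by blast
  note ci3 = cv_integral[OF P cvk f3(1)]
  have s5: "(\<integral>\<omega>. W a (k-1) \<omega> *\<^sub>R ((ind \<omega> * cvv a k \<omega>) *\<^sub>R gv a \<omega>) \<partial>M)
      = (\<integral>\<omega>. W a k \<omega> *\<^sub>R (cp a k \<omega> *\<^sub>R gv a \<omega>) \<partial>M)"
  proof -
    have "(\<integral>\<omega>. W a (k-1) \<omega> *\<^sub>R ((ind \<omega> * cvv a k \<omega>) *\<^sub>R gv a \<omega>) \<partial>M)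
       = (\<integral>\<omega>. indicator {\<omega>\<in>space M. A k \<omega> = (\<not> a k)} \<omega> *\<^sub>R f3 (abar A (k-1) \<omega>, lbar L k \<omega>) \<partial>M)"
    proof (intro Bochner_Integration.integral_cong refl)
      fix \<omega> assume w: "\<omega> \<in> space M"
      show "W a (k-1) \<omega> *\<^sub>R ((ind \<omega> * cvv a k \<omega>) *\<^sub>R gv a \<omega>)
          = indicator {\<omega>\<in>space M. A k \<omega> = (\<not> a k)} \<omega> *\<^sub>R f3 (abar A (k-1) \<omega>, lbar L k \<omega>)"
      proof -
        have f3e: "f3 (abar A (k-1) \<omega>, lbar L k \<omega>) = W a (k-1) \<omega> *\<^sub>R (cvv a k \<omega> *\<^sub>R gv a \<omega>)"
          using f3(2) w by metis
        show ?thesis unfolding f3e by (simp add: ind_def scaleR_scaleR mult.commute mult.left_commute)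
      qed
    qed
    also have "\<dots> = (\<integral>\<omega>. ptrue k (\<not> a k) (abar A (k-1) \<omega>, lbar L k \<omega>) *\<^sub>R f3 (abar A (k-1) \<omega>, lbar L k \<omega>) \<partial>M)"
      by (rule ci3(2))
    also have "\<dots> = (\<integral>\<omega>. W a (k-1) \<omega> *\<^sub>R (cp a k \<omega> *\<^sub>R gv a \<omega>) \<partial>M)"
    proof (intro Bochner_Integration.integral_cong refl)
      fix \<omega> assume w: "\<omega> \<in> space M"
      show "ptrue k (\<not> a k) (abar A (k-1) \<omega>, lbar L k \<omega>) *\<^sub>R f3 (abar A (k-1) \<omega>, lbar L k \<omega>)
          = W a (k-1) \<omega> *\<^sub>R (cp a k \<omega> *\<^sub>R gv a \<omega>)"
      proof (cases "W a (k-1) \<omega> = 0")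
        case True then show ?thesis using f3(2) w by (metis scaleR_zero_left scaleR_zero_right)
      next
        case False
        then have e: "abar A (k-1) \<omega> = trunc (k-1) a" by (rule W_nz)
        have f3e: "f3 (abar A (k-1) \<omega>, lbar L k \<omega>) = W a (k-1) \<omega> *\<^sub>R (cvv a k \<omega> *\<^sub>R gv a \<omega>)"
          using f3(2) w by metis
        show ?thesis unfolding f3e unfolding e
          by (simp add: cp_def pflip_def scaleR_scaleR mult.commute mult.left_commute)
      qed
    qed
    also have "\<dots> = (\<integral>\<omega>. W a k \<omega> *\<^sub>R (cp a k \<omega> *\<^sub>R gv a \<omega>) \<partial>M)"
      unfolding cp_def[abs_def] using k1
      by (intro T1(2)[OF k, symmetric] isf_scaleR isf_mult isf_cvv[OF k a] isf_pflip[OF k] isf_g)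
    finally show ?thesis .
  qed
  show ?thesis using s1 s2 s3 s4 s5 by simp
qed


lemma T3:
  assumes a: "a \<in> regimes K" and j: "j \<le> K"
  shows "(\<integral>\<omega>. W a 0 \<omega> *\<^sub>R (Iv a \<omega> *\<^sub>R gv a \<omega>) \<partial>M)
       = (\<integral>\<omega>. W a j \<omega> *\<^sub>R (Iv a \<omega> *\<^sub>R gv a \<omega>) \<partial>M)
         - (\<Sum>k\<in>{1..j}. \<integral>\<omega>. W a k \<omega> *\<^sub>R (cp a k \<omega> *\<^sub>R gv a \<omega>) \<partial>M)"
  using j
proof (induction j)
  case 0 then show ?case by simp
next
  case (Suc j)
  have k: "Suc j \<in> {1..K}" using Suc by auto
  have "(\<Sum>k\<in>{1..Suc j}. \<integral>\<omega>. W a k \<omega> *\<^sub>R (cp a k \<omega> *\<^sub>R gv a \<omega>) \<partial>M)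
     = (\<Sum>k\<in>{1..j}. \<integral>\<omega>. W a k \<omega> *\<^sub>R (cp a k \<omega> *\<^sub>R gv a \<omega>) \<partial>M)
       + (\<integral>\<omega>. W a (Suc j) \<omega> *\<^sub>R (cp a (Suc j) \<omega> *\<^sub>R gv a \<omega>) \<partial>M)"
    by (simp add: sum.nat_ivl_Suc')
  then show ?case using Suc T2[OF k a] by simp
qed

lemma cpK:
  assumes a: "a \<in> regimes K" and k: "k \<in> {1..K}"
  shows "(\<integral>\<omega>. W a k \<omega> *\<^sub>R (cp a k \<omega> *\<^sub>R gv a \<omega>) \<partial>M) = (\<integral>\<omega>. W a K \<omega> *\<^sub>R (cp a k \<omega> *\<^sub>R gv a \<omega>) \<partial>M)"
proof -
  have i0: "isf 0 k (\<lambda>\<omega>. cp a k \<omega> *\<^sub>R gv a \<omega>)"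
    unfolding cp_def[abs_def] using k by (intro isf_scaleR isf_mult isf_cvv[OF k a] isf_pflip[OF k] isf_g) auto
  have "isf (k'-1) k' (\<lambda>\<omega>. cp a k \<omega> *\<^sub>R gv a \<omega>)" if "k' \<in> {Suc k..K}" for k'
    by (rule isf_mono[OF i0]) (use that in auto)
  then show ?thesis using T1iter[of k "\<lambda>\<omega>. cp a k \<omega> *\<^sub>R gv a \<omega>" a] k by auto
qed

lemma cp_bound:
  assumes a: "a \<in> regimes K" and k: "k \<in> {1..K}"
  shows "AE \<omega> in M. W a K \<omega> \<noteq> 0 \<longrightarrow> \<bar>cp a k \<omega>\<bar> \<le> 1"
  using AE_pt01[OF k, of "\<not> a k"] AE_space
proof eventually_elim
  case (elim \<omega>)
  show ?case
  proof
    assume "W a K \<omega> \<noteq> 0"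
    then have "abar A K \<omega> = trunc K a" by (rule W_nz)
    then have "abar A (k-1) \<omega> = trunc (k-1) a"
      using trunc_abar[of "k-1" K \<omega>] trunc_trunc[of "k-1" K a] k by auto
    then have p: "0 \<le> pflip a k \<omega> \<and> pflip a k \<omega> \<le> 1" using elim by (simp add: pflip_def)
    have c: "\<bar>cvv a k \<omega>\<bar> \<le> 1" using cvv_bound[OF k a] elim by auto
    have "\<bar>cvv a k \<omega>\<bar> * \<bar>pflip a k \<omega>\<bar> \<le> 1 * 1" using p c by (intro mult_mono) auto
    then show "\<bar>cp a k \<omega>\<bar> \<le> 1" by (simp add: cp_def abs_mult)
  qed
qed

lemma cp_meas: "a \<in> regimes K \<Longrightarrow> k \<in> {1..K} \<Longrightarrow> cp a k \<in> borel_measurable M"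
  unfolding cp_def[abs_def] by (rule isf_meas[of k k]) (auto intro!: isf_mult isf_cvv isf_pflip)

lemma RI:
  assumes a: "a \<in> regimes K"
  shows "integrable M (\<lambda>\<omega>. W a K \<omega> *\<^sub>R ((Iv a \<omega> - (\<Sum>k\<in>{1..K}. cp a k \<omega>) - q) *\<^sub>R gv a \<omega>))
    \<and> (\<integral>\<omega>. W a K \<omega> *\<^sub>R ((Iv a \<omega> - (\<Sum>k\<in>{1..K}. cp a k \<omega>) - q) *\<^sub>R gv a \<omega>) \<partial>M)
      = (\<integral>\<omega>. (FZ a (yv a \<omega>) (zf (L 1 \<omega>)) - q) *\<^sub>R gv a \<omega> \<partial>M)
    \<and> integrable M (\<lambda>\<omega>. (FZ a (yv a \<omega>) (zf (L 1 \<omega>)) - q) *\<^sub>R gv a \<omega>)"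
proof -
  have KK: "K \<le> K" by simp
  have ig0: "integrable M (gv a)" using d_int a by (simp add: gv_def[abs_def])
  have iI: "integrable M (\<lambda>\<omega>. W a K \<omega> *\<^sub>R (Iv a \<omega> *\<^sub>R gv a \<omega>))"
    by (rule intb[OF KK a Iv_meas[OF a]]) (auto simp: Iv_def)
  have iI0: "integrable M (\<lambda>\<omega>. W a 0 \<omega> *\<^sub>R (Iv a \<omega> *\<^sub>R gv a \<omega>))"
    by (rule intb[OF _ a Iv_meas[OF a]]) (auto simp: Iv_def)
  have icp: "integrable M (\<lambda>\<omega>. W a K \<omega> *\<^sub>R (cp a k \<omega> *\<^sub>R gv a \<omega>))" if k: "k \<in> {1..K}" for k
    by (rule intb[OF KK a cp_meas[OF a k] cp_bound[OF a k]])
  have ig: "integrable M (\<lambda>\<omega>. W a K \<omega> *\<^sub>R gv a \<omega>)" by (rule int_Wg[OF KK a])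
  have iq: "integrable M (\<lambda>\<omega>. q *\<^sub>R (W a K \<omega> *\<^sub>R gv a \<omega>))" by (rule integrable_scaleR_right[OF ig])
  have pw: "W a K \<omega> *\<^sub>R ((Iv a \<omega> - (\<Sum>k\<in>{1..K}. cp a k \<omega>) - q) *\<^sub>R gv a \<omega>)
     = W a K \<omega> *\<^sub>R (Iv a \<omega> *\<^sub>R gv a \<omega>) - (\<Sum>k\<in>{1..K}. W a K \<omega> *\<^sub>R (cp a k \<omega> *\<^sub>R gv a \<omega>))
       - q *\<^sub>R (W a K \<omega> *\<^sub>R gv a \<omega>)" for \<omega>
    by (simp add: scaleR_left_diff_distrib scaleR_right_diff_distrib scaleR_sum_left scaleR_sum_right)
  have isum: "integrable M (\<lambda>\<omega>. \<Sum>k\<in>{1..K}. W a K \<omega> *\<^sub>R (cp a k \<omega> *\<^sub>R gv a \<omega>))"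
    using icp by (intro Bochner_Integration.integrable_sum) auto
  have int: "integrable M (\<lambda>\<omega>. W a K \<omega> *\<^sub>R ((Iv a \<omega> - (\<Sum>k\<in>{1..K}. cp a k \<omega>) - q) *\<^sub>R gv a \<omega>))"
    unfolding pw using iI isum iq by (intro Bochner_Integration.integrable_diff) auto
  have "(\<integral>\<omega>. W a K \<omega> *\<^sub>R ((Iv a \<omega> - (\<Sum>k\<in>{1..K}. cp a k \<omega>) - q) *\<^sub>R gv a \<omega>) \<partial>M)
     = (\<integral>\<omega>. W a K \<omega> *\<^sub>R (Iv a \<omega> *\<^sub>R gv a \<omega>) \<partial>M)
       - (\<Sum>k\<in>{1..K}. \<integral>\<omega>. W a K \<omega> *\<^sub>R (cp a k \<omega> *\<^sub>R gv a \<omega>) \<partial>M)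
       - q *\<^sub>R (\<integral>\<omega>. W a K \<omega> *\<^sub>R gv a \<omega> \<partial>M)"
    unfolding pw
    apply (subst Bochner_Integration.integral_diff[OF Bochner_Integration.integrable_diff[OF iI isum] iq])
    apply (subst Bochner_Integration.integral_diff[OF iI isum])
    apply (subst Bochner_Integration.integral_sum)
     apply (use icp in blast)
    apply (subst integral_scaleR_right)
    apply (rule refl)
    done
  also have "(\<Sum>k\<in>{1..K}. \<integral>\<omega>. W a K \<omega> *\<^sub>R (cp a k \<omega> *\<^sub>R gv a \<omega>) \<partial>M)
           = (\<Sum>k\<in>{1..K}. \<integral>\<omega>. W a k \<omega> *\<^sub>R (cp a k \<omega> *\<^sub>R gv a \<omega>) \<partial>M)"
    using cpK[OF a] by (intro sum.cong refl) auto
  also have "(\<integral>\<omega>. W a K \<omega> *\<^sub>R gv a \<omega> \<partial>M) = (\<integral>\<omega>. gv a \<omega> \<partial>M)"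
  proof -
    have "isf (k-1) k (gv a)" if "k \<in> {Suc 0..K}" for k using that by (intro isf_g) auto
    then show ?thesis using T1iter[of 0 "gv a" a] by (simp add: W0)
  qed
  finally have e1: "(\<integral>\<omega>. W a K \<omega> *\<^sub>R ((Iv a \<omega> - (\<Sum>k\<in>{1..K}. cp a k \<omega>) - q) *\<^sub>R gv a \<omega>) \<partial>M)
     = (\<integral>\<omega>. Iv a \<omega> *\<^sub>R gv a \<omega> \<partial>M) - q *\<^sub>R (\<integral>\<omega>. gv a \<omega> \<partial>M)"
    using T3[OF a order_refl] by (simp add: W0)
  have CV: "cond_version M NZ (\<lambda>\<omega>. zf (L 1 \<omega>)) (\<lambda>\<omega>. Ya a \<omega> \<le> h a (zf (L 1 \<omega>)) \<theta>0) (\<lambda>z. FZ a (h a z \<theta>0) z)"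
    by (rule CVZ[OF a])
  have dm: "(\<lambda>z. d a z \<theta>0) \<in> borel_measurable NZ" using meas_d by blast
  note ci = cv_integral[OF P CV dm]
  have Ie: "indicator {\<omega>\<in>space M. Ya a \<omega> \<le> h a (zf (L 1 \<omega>)) \<theta>0} \<omega> *\<^sub>R d a (zf (L 1 \<omega>)) \<theta>0
      = Iv a \<omega> *\<^sub>R gv a \<omega>" if "\<omega> \<in> space M" for \<omega>
    using that by (simp add: Iv_def yv_def gv_def indicator_def)
  have iIg: "integrable M (\<lambda>\<omega>. Iv a \<omega> *\<^sub>R gv a \<omega>)" using iI0 by (simp add: W0)
  have iFZ: "integrable M (\<lambda>\<omega>. FZ a (yv a \<omega>) (zf (L 1 \<omega>)) *\<^sub>R gv a \<omega>)"
  proof -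
    have "integrable M (\<lambda>\<omega>. indicator {\<omega>\<in>space M. Ya a \<omega> \<le> h a (zf (L 1 \<omega>)) \<theta>0} \<omega> *\<^sub>R d a (zf (L 1 \<omega>)) \<theta>0)"
    proof -
      have "integrable M (\<lambda>\<omega>. indicator {\<omega>\<in>space M. Ya a \<omega> \<le> h a (zf (L 1 \<omega>)) \<theta>0} \<omega> *\<^sub>R d a (zf (L 1 \<omega>)) \<theta>0)
          = integrable M (\<lambda>\<omega>. Iv a \<omega> *\<^sub>R gv a \<omega>)"
        by (intro Bochner_Integration.integrable_cong refl Ie)
      then show ?thesis using iIg by simp
    qed
    then show ?thesis using ci(1) by (simp add: yv_def gv_def)
  qed
  have "(\<integral>\<omega>. Iv a \<omega> *\<^sub>R gv a \<omega> \<partial>M) = (\<integral>\<omega>. FZ a (yv a \<omega>) (zf (L 1 \<omega>)) *\<^sub>R gv a \<omega> \<partial>M)"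
  proof -
    have "(\<integral>\<omega>. Iv a \<omega> *\<^sub>R gv a \<omega> \<partial>M)
       = (\<integral>\<omega>. indicator {\<omega>\<in>space M. Ya a \<omega> \<le> h a (zf (L 1 \<omega>)) \<theta>0} \<omega> *\<^sub>R d a (zf (L 1 \<omega>)) \<theta>0 \<partial>M)"
      by (intro Bochner_Integration.integral_cong refl Ie[symmetric])
    then show ?thesis using ci(2) by (simp add: yv_def gv_def)
  qed
  moreover have "(\<integral>\<omega>. (FZ a (yv a \<omega>) (zf (L 1 \<omega>)) - q) *\<^sub>R gv a \<omega> \<partial>M)
     = (\<integral>\<omega>. FZ a (yv a \<omega>) (zf (L 1 \<omega>)) *\<^sub>R gv a \<omega> \<partial>M) - q *\<^sub>R (\<integral>\<omega>. gv a \<omega> \<partial>M)"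
  proof -
    have "(\<integral>\<omega>. (FZ a (yv a \<omega>) (zf (L 1 \<omega>)) - q) *\<^sub>R gv a \<omega> \<partial>M)
      = (\<integral>\<omega>. FZ a (yv a \<omega>) (zf (L 1 \<omega>)) *\<^sub>R gv a \<omega> - q *\<^sub>R gv a \<omega> \<partial>M)"
      by (simp add: scaleR_left_diff_distrib)
    also have "\<dots> = (\<integral>\<omega>. FZ a (yv a \<omega>) (zf (L 1 \<omega>)) *\<^sub>R gv a \<omega> \<partial>M) - (\<integral>\<omega>. q *\<^sub>R gv a \<omega> \<partial>M)"
      using iFZ ig0 by (intro Bochner_Integration.integral_diff) auto
    finally show ?thesis by simp
  qed
  moreover have "integrable M (\<lambda>\<omega>. (FZ a (yv a \<omega>) (zf (L 1 \<omega>)) - q) *\<^sub>R gv a \<omega>)"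
    unfolding scaleR_left_diff_distrib using iFZ ig0 by (intro Bochner_Integration.integrable_diff) auto
  ultimately show ?thesis using int e1 by simp
qed

lemma trunc_upd: "trunc (k-1) (f(k := v)) = trunc (k-1) f"
  by (auto simp: trunc_def fun_eq_iff)

definition VV where "VV a \<omega> = W a K \<omega> *\<^sub>R ((Iv a \<omega> - (\<Sum>k\<in>{1..K}. cp a k \<omega>) - q) *\<^sub>R gv a \<omega>)"

lemma Ueq:
  assumes w: "\<omega> \<in> space M" and aw: "a = abar A K \<omega>"
  shows "U_BCIPW K A L Y zf h d \<pi> cw \<gamma> q \<theta>0 \<alpha>0 \<omega> = VV a \<omega>"
proof -
  have a: "a \<in> regimes K" using aw abar_regimes by simp
  have ak: "abar A k \<omega> = trunc k a" if "k \<le> K" for k using trunc_abar[OF that] aw by simp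
  have ak1: "trunc (k-1) (abar A k \<omega>) = trunc (k-1) a" if "k \<le> K" for k
    using trunc_abar[of "k-1" k \<omega>] trunc_abar[of "k-1" K \<omega>] aw that by simp
  have Akk: "A k \<omega> = a k" if "k \<in> {1..K}" for k using that aw by (simp add: abar_def)
  have pib: "(\<Prod>k\<in>{1..K}. \<pi> k (abar A k \<omega>) (lbar L k \<omega>) (\<alpha>0 k)) = PP a K \<omega>"
    unfolding PP_def
  proof (rule prod.cong[OF refl])
    fix k assume k: "k \<in> {1..K}"
    have "abar A k \<omega> k = a k" using k Akk by (simp add: abar_def)
    then show "\<pi> k (abar A k \<omega>) (lbar L k \<omega>) (\<alpha>0 k) = ptrue k (a k) (trunc (k - 1) a, lbar L k \<omega>)"
      using pi_correct k ak1[of k] by simp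
  qed
  have cst: "(\<Sum>k\<in>{1..K}. cw k (h a (zf (L 1 \<omega>)) \<theta>0) a (lbar L k \<omega>) (\<gamma> k)
          * \<pi> k ((abar A k \<omega>)(k := \<not> A k \<omega>)) (lbar L k \<omega>) (\<alpha>0 k)) = (\<Sum>k\<in>{1..K}. cp a k \<omega>)"
  proof (rule sum.cong[OF refl])
    fix k assume k: "k \<in> {1..K}"
    have "\<pi> k ((abar A k \<omega>)(k := \<not> A k \<omega>)) (lbar L k \<omega>) (\<alpha>0 k) = pflip a k \<omega>"
      using pi_correct k ak1[of k] Akk[OF k] by (simp add: pflip_def trunc_upd)
    moreover have "cw k (h a (zf (L 1 \<omega>)) \<theta>0) a (lbar L k \<omega>) (\<gamma> k) = cvv a k \<omega>"
      using c_correct k a by (simp add: cvv_def yv_def)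
    ultimately show "cw k (h a (zf (L 1 \<omega>)) \<theta>0) a (lbar L k \<omega>) (\<gamma> k)
          * \<pi> k ((abar A k \<omega>)(k := \<not> A k \<omega>)) (lbar L k \<omega>) (\<alpha>0 k) = cp a k \<omega>"
      by (simp add: cp_def)
  qed
  have Yeq: "Y \<omega> = Ya a \<omega>" using A1 a w aw by simp
  have WK: "W a K \<omega> = 1 / PP a K \<omega>" using ak[of K] by (simp add: W_def)
  have "U_BCIPW K A L Y zf h d \<pi> cw \<gamma> q \<theta>0 \<alpha>0 \<omega>
      = ((Iv a \<omega> - (\<Sum>k\<in>{1..K}. cp a k \<omega>) - q) / PP a K \<omega>) *\<^sub>R gv a \<omega>"
    unfolding U_BCIPW_def Let_def aw[symmetric] pib cst
    by (simp add: Yeq Iv_def yv_def gv_def)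
  also have "\<dots> = VV a \<omega>" by (simp add: VV_def WK)
  finally show ?thesis .
qed

lemma Vz:
  assumes "a \<in> regimes K" "a \<noteq> abar A K \<omega>"
  shows "VV a \<omega> = 0"
proof -
  have "abar A K \<omega> \<noteq> trunc K a" using assms trunc_regimes by simp
  then show ?thesis by (simp add: VV_def W_def)
qed

lemma main:
  "integrable M (U_BCIPW K A L Y zf h d \<pi> cw \<gamma> q \<theta>0 \<alpha>0)
   \<and> (\<integral>\<omega>. U_BCIPW K A L Y zf h d \<pi> cw \<gamma> q \<theta>0 \<alpha>0 \<omega> \<partial>M) = 0"
proof -
  let ?U = "U_BCIPW K A L Y zf h d \<pi> cw \<gamma> q \<theta>0 \<alpha>0"
  have pw: "?U \<omega> = (\<Sum>a\<in>regimes K. VV a \<omega>)" if w: "\<omega> \<in> space M" for \<omega>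
  proof -
    have "(\<Sum>a\<in>regimes K. VV a \<omega>) = (\<Sum>a\<in>regimes K. if abar A K \<omega> = a then VV a \<omega> else 0)"
      using Vz by (intro sum.cong refl) auto
    also have "\<dots> = VV (abar A K \<omega>) \<omega>" using finite_regimes abar_regimes by (simp add: sum.delta)
    finally show ?thesis using Ueq[OF w refl] by simp
  qed
  have iV: "integrable M (VV a)" if "a \<in> regimes K" for a using RI[OF that] by (simp add: VV_def[abs_def])
  have iS: "integrable M (\<lambda>\<omega>. \<Sum>a\<in>regimes K. VV a \<omega>)" using iV by (intro Bochner_Integration.integrable_sum) auto
  have i1: "integrable M ?U = integrable M (\<lambda>\<omega>. \<Sum>a\<in>regimes K. VV a \<omega>)"
    by (intro Bochner_Integration.integrable_cong refl pw)
  have j1: "(\<integral>\<omega>. ?U \<omega> \<partial>M) = (\<integral>\<omega>. (\<Sum>a\<in>regimes K. VV a \<omega>) \<partial>M)"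
    by (intro Bochner_Integration.integral_cong refl pw)
  also have "\<dots> = (\<Sum>a\<in>regimes K. \<integral>\<omega>. VV a \<omega> \<partial>M)"
    using iV by (intro Bochner_Integration.integral_sum) auto
  also have "\<dots> = (\<Sum>a\<in>regimes K. \<integral>\<omega>. (FZ a (yv a \<omega>) (zf (L 1 \<omega>)) - q) *\<^sub>R gv a \<omega> \<partial>M)"
    using RI by (intro sum.cong refl) (simp add: VV_def[abs_def])
  also have "\<dots> = (\<integral>\<omega>. (\<Sum>a\<in>regimes K. (FZ a (yv a \<omega>) (zf (L 1 \<omega>)) - q) *\<^sub>R gv a \<omega>) \<partial>M)"
    using RI by (intro Bochner_Integration.integral_sum[symmetric]) auto
  also have "\<dots> = 0" using theta0 by (simp add: yv_def gv_def)
  finally show ?thesis using i1 iS by simp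
qed

end

theorem lemma17:
  fixes M :: "'w measure" and K :: nat
    and A :: "nat \<Rightarrow> 'w \<Rightarrow> bool" and L :: "nat \<Rightarrow> 'w \<Rightarrow> 'l" and N :: "'l measure"
    and Y :: "'w \<Rightarrow> real" and Ya :: "(nat \<Rightarrow> bool) \<Rightarrow> 'w \<Rightarrow> real"
    and ymin ymax :: real
    and NZ :: "'z measure" and zf :: "'l \<Rightarrow> 'z"
    and h :: "(nat \<Rightarrow> bool) \<Rightarrow> 'z \<Rightarrow> 'th \<Rightarrow> real"
    and d :: "(nat \<Rightarrow> bool) \<Rightarrow> 'z \<Rightarrow> 'th \<Rightarrow> 'v::euclidean_space"
    and \<pi> :: "nat \<Rightarrow> (nat \<Rightarrow> bool) \<Rightarrow> (nat \<Rightarrow> 'l) \<Rightarrow> 'p \<Rightarrow> real" and \<alpha>0 :: "nat \<Rightarrow> 'p"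
    and ptrue :: "nat \<Rightarrow> bool \<Rightarrow> ((nat \<Rightarrow> bool) \<times> (nat \<Rightarrow> 'l)) \<Rightarrow> real"
    and Fk :: "(nat \<Rightarrow> bool) \<Rightarrow> nat \<Rightarrow> real \<Rightarrow> ((nat \<Rightarrow> bool) \<times> (nat \<Rightarrow> 'l)) \<Rightarrow> real"
    and FZ :: "(nat \<Rightarrow> bool) \<Rightarrow> real \<Rightarrow> 'z \<Rightarrow> real"
    and cw :: "nat \<Rightarrow> real \<Rightarrow> (nat \<Rightarrow> bool) \<Rightarrow> (nat \<Rightarrow> 'l) \<Rightarrow> 'g \<Rightarrow> real" and \<gamma> :: "nat \<Rightarrow> 'g"
    and q :: real and \<theta>0 :: 'th
  assumes P: "prob_space M"
    and K: "K \<ge> 1"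
    and measA: "\<forall>k\<in>{1..K}. A k \<in> measurable M (count_space UNIV)"
    and measL: "\<forall>k\<in>{1..K}. L k \<in> measurable M N"
    and measY: "Y \<in> borel_measurable M"
    and measYa: "\<forall>a\<in>regimes K. Ya a \<in> borel_measurable M"
    and Ya_cont: "\<forall>a\<in>regimes K. (\<forall>\<omega>\<in>space M. Ya a \<omega> \<in> {ymin..ymax})
                     \<and> (\<forall>y. measure M {\<omega>\<in>space M. Ya a \<omega> = y} = 0)"
    and measZ: "zf \<in> measurable N NZ"
    and meas_h: "\<forall>a \<theta>. (\<lambda>z. h a z \<theta>) \<in> borel_measurable NZ"
    and meas_d: "\<forall>a \<theta>. (\<lambda>z. d a z \<theta>) \<in> borel_measurable NZ"
    and A1: "\<forall>a\<in>regimes K. \<forall>\<omega>\<in>space M. abar A K \<omega> = a \<longrightarrow> Ya a \<omega> = Y \<omega>"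
    and ptrue: "\<forall>k\<in>{1..K}. \<forall>b. cond_version M (hist_space N k)
                  (\<lambda>\<omega>. (abar A (k - 1) \<omega>, lbar L k \<omega>)) (\<lambda>\<omega>. A k \<omega> = b) (ptrue k b)"
    and A3: "\<forall>k\<in>{1..K}. AE \<omega> in M. \<forall>b. ptrue k b (abar A (k - 1) \<omega>, lbar L k \<omega>) > 0"
    and pi_correct: "\<forall>k\<in>{1..K}. \<forall>a l. \<pi> k a l (\<alpha>0 k) = ptrue k (a k) (trunc (k - 1) a, l)"
    and Fk: "\<forall>a\<in>regimes K. \<forall>k\<in>{1..K}. cond_cdf M (hist_space N k)
                  (\<lambda>\<omega>. (abar A k \<omega>, lbar L k \<omega>)) (Ya a) (Fk a k)"
    and c_correct: "\<forall>k\<in>{1..K}. \<forall>y. \<forall>a\<in>regimes K. \<forall>l. cw k y a l (\<gamma> k) = conf_true Fk k y a l"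
    and FZ: "\<forall>a\<in>regimes K. cond_cdf M NZ (\<lambda>\<omega>. zf (L 1 \<omega>)) (Ya a) (FZ a)"
    and A4: "\<forall>a\<in>regimes K. \<forall>z\<in>space NZ. \<exists>!y. FZ a y z = q"
    and d_int: "\<forall>a\<in>regimes K. integrable M (\<lambda>\<omega>. d a (zf (L 1 \<omega>)) \<theta>0)"
    and theta0: "(\<integral>\<omega>. (\<Sum>a\<in>regimes K. (FZ a (h a (zf (L 1 \<omega>)) \<theta>0) (zf (L 1 \<omega>)) - q)
                       *\<^sub>R d a (zf (L 1 \<omega>)) \<theta>0) \<partial>M) = 0"
  shows "integrable M (U_BCIPW K A L Y zf h d \<pi> cw \<gamma> q \<theta>0 \<alpha>0)
         \<and> (\<integral>\<omega>. U_BCIPW K A L Y zf h d \<pi> cw \<gamma> q \<theta>0 \<alpha>0 \<omega> \<partial>M) = 0"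
  proof -
  interpret LL: L17 M K A L N Y Ya ymin ymax NZ zf h d \<pi> \<alpha>0 ptrue Fk FZ cw \<gamma> q \<theta>0
    using assms by (intro L17.intro) assumption+
  show ?thesis by (rule LL.main)
qed

end
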